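(* Let $\Gamma\subset\mathrm{SL}_2(\mathbb{R})$ be a Fuchsian group acting freely and properly discontinuously on $\mathbb{H}$, let $k$ be an integer, and let $A_\bullet,\tilde A_\bullet\in\mathrm{Z}^1(\Gamma,\mathbb{D}_k)$ be equivalent formal deformation cocycles. Then the deformations of $L_k$ they define are isomorphic; that is, the sheaves $\mathcal{L}_{A}$ and $\mathcal{L}_{\tilde A}$ on $Y_\Gamma$ are isomorphic.
   Context: $Y_\Gamma=\Gamma\backslash\mathbb{H}$ with quotient map $\pi:\mathbb{H}\to Y_\Gamma$; $j_\gamma(\tau)=c\tau+d$; $L_k$ is the line bundle on $Y_\Gamma$ whose sections are weight-$k$ modular forms. $\Gamma$ acts on power series in commuting variables $\rho_1,\dots,\rho_n$ with coefficients in linear differential operators by $(A\|_k\gamma)(\tau,\partial_\tau)=j_\gamma(\tau)^{-k}A(\gamma\tau,\partial_{\gamma\tau})j_\gamma(\tau)^k$, $\partial_{\gamma\tau}=j_\gamma(\tau)^2\partial_\tau$. $\mathfrak{d}_k=\{2p\partial_\tau+kp':p\in\mathbb{C}[\tau],\deg p\le2\}$ with commutator bracket, $\mathfrak{d}_k^\rho=(\rho)\mathfrak{d}_k[[\rho_1,\dots,\rho_n]]$, $\mathbb{D}_k=\exp(\mathfrak{d}_k^\rho)$. A formal deformation cocycle of weight $k$ is $A:\Gamma\to\mathbb{D}_k$ with $A_{\gamma\delta}=(A_\gamma\|_k\delta)A_\delta$; $A,\tilde A$ are equivalent if $\tilde A_\gamma=(C\|_k\gamma)A_\gamma C^{-1}$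 for some $C\in\mathbb{D}_k$ and all $\gamma$. The deformation of $L_k$ defined by $A$ is the sheaf $\mathcal{L}_A$ with $\mathcal{L}_A(U)=\{f:\pi^{-1}(U)\to\mathbb{C}[[\rho_1,\dots,\rho_n]]\ \text{holomorphic}: j_\gamma(\tau)^{-k}f(\gamma\tau)=A_\gamma(\tau,\partial_\tau)f(\tau)\ \forall\gamma\in\Gamma\}$ for open $U\subset Y_\Gamma$. *)

theory Defs
  imports "HOL-Analysis.Analysis"
begin

type_synonym sl2 = "real \<times> real \<times> real \<times> real"  (* (a,b,c,d) = matrix [[a,b],[c,d]] *)

definition SL2R :: "sl2 set" where
  "SL2R = {(a,b,c,d). a*d - b*c = 1}"

definition sl_one :: sl2 where "sl_one = (1,0,0,1)"

fun sl_mult :: "sl2 \<Rightarrow> sl2 \<Rightarrow> sl2" where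
  "sl_mult (a,b,c,d) (a',b',c',d') = (a*a' + b*c', a*b' + b*d', c*a' + d*c', c*b' + d*d')"

fun sl_inv :: "sl2 \<Rightarrow> sl2" where
  "sl_inv (a,b,c,d) = (d, -b, -c, a)"

fun moeb :: "sl2 \<Rightarrow> complex \<Rightarrow> complex" where
  "moeb (a,b,c,d) \<tau> = (of_real a * \<tau> + of_real b) / (of_real c * \<tau> + of_real d)"

fun jfac :: "sl2 \<Rightarrow> complex \<Rightarrow> complex" where
  "jfac (a,b,c,d) \<tau> = of_real c * \<tau> + of_real d"

definition upper_half :: "complex set" where
  "upper_half = {z. Im z > 0}"

definition fuchsian_free_pd :: "sl2 set \<Rightarrow> bool" where
  "fuchsian_free_pd G \<longleftrightarrow>
     G \<subseteq> SL2R \<and> sl_one \<in> G \<and>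
     (\<forall>g\<in>G. \<forall>h\<in>G. sl_mult g h \<in> G) \<and> (\<forall>g\<in>G. sl_inv g \<in> G) \<and>
     (\<forall>g\<in>G. \<exists>e>0. \<forall>h\<in>G. dist h g < e \<longrightarrow> h = g) \<and>
     (\<forall>g\<in>G. \<forall>\<tau>\<in>upper_half. moeb g \<tau> = \<tau> \<longrightarrow> g = sl_one) \<and>
     (\<forall>K. compact K \<and> K \<subseteq> upper_half \<longrightarrow>
          finite {g\<in>G. moeb g ` K \<inter> K \<noteq> {}})"

text \<open>Multi-indices are functions nat => nat vanishing from n on. A (holomorphic-function-valued)
  formal power series is a family of coefficient functions indexed by multi-indices.\<close>
type_synonym mi = "nat \<Rightarrow> nat"
type_synonym fser = "mi \<Rightarrow> complex \<Rightarrow> complex"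

definition multi :: "nat \<Rightarrow> mi set" where
  "multi n = {\<alpha>. \<forall>i\<ge>n. \<alpha> i = 0}"

definition lower :: "nat \<Rightarrow> mi \<Rightarrow> mi set" where
  "lower n \<gamma> = {\<alpha> \<in> multi n. \<forall>i. \<alpha> i \<le> \<gamma> i}"

definition mdeg :: "nat \<Rightarrow> mi \<Rightarrow> nat" where
  "mdeg n \<alpha> = (\<Sum>i<n. \<alpha> i)"

definition mi_diff :: "mi \<Rightarrow> mi \<Rightarrow> mi" where
  "mi_diff \<gamma> \<alpha> = (\<lambda>i. \<gamma> i - \<alpha> i)"

text \<open>Product of a constant power series s in C[[\<rho>]] with a series f.\<close>
definition ps_scale :: "nat \<Rightarrow> (mi \<Rightarrow> complex) \<Rightarrow> fser \<Rightarrow> fser" where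
  "ps_scale n s f = (\<lambda>\<gamma> \<tau>. \<Sum>\<alpha>\<in>lower n \<gamma>. s \<alpha> * f (mi_diff \<gamma> \<alpha>) \<tau>)"

text \<open>An element of d_k is 2p d/d\<tau> + k p' with p = a + b\<tau> + c\<tau>^2, encoded by (a,b,c).\<close>
fun apply_dk :: "int \<Rightarrow> complex \<times> complex \<times> complex \<Rightarrow> (complex \<Rightarrow> complex) \<Rightarrow> complex \<Rightarrow> complex" where
  "apply_dk k (a,b,c) g \<tau> = 2 * (a + b*\<tau> + c*\<tau>^2) * deriv g \<tau> + of_int k * (b + 2*c*\<tau>) * g \<tau>"

text \<open>Elements of d_k^\<rho> = (\<rho>) d_k[[\<rho>]]: coefficient families with vanishing constant term.\<close>
definition dk_rho :: "(mi \<Rightarrow> complex \<times> complex \<times> complex) set" where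
  "dk_rho = {X. X (\<lambda>_. 0) = (0,0,0)}"

definition Xop :: "nat \<Rightarrow> int \<Rightarrow> (mi \<Rightarrow> complex \<times> complex \<times> complex) \<Rightarrow> fser \<Rightarrow> fser" where
  "Xop n k X f = (\<lambda>\<gamma> \<tau>. \<Sum>\<alpha>\<in>lower n \<gamma> - {(\<lambda>_. 0)}. apply_dk k (X \<alpha>) (f (mi_diff \<gamma> \<alpha>)) \<tau>)"

text \<open>exp(X) for X in d_k^\<rho>; the \<rho>^\<gamma>-coefficient of X^m f vanishes for m > |\<gamma>|,
  so the exponential series is a finite sum coefficientwise.\<close>
definition expop :: "nat \<Rightarrow> int \<Rightarrow> (mi \<Rightarrow> complex \<times> complex \<times> complex) \<Rightarrow> fser \<Rightarrow> fser" where
  "expop n k X f = (\<lambda>\<gamma> \<tau>. \<Sum>m\<le>mdeg n \<gamma>. ((Xop n k X ^^ m) f) \<gamma> \<tau> / of_nat (fact m))"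

text \<open>(P ||_k g)(\<tau>,\<partial>_\<tau>) = j_g(\<tau>)^{-k} P(g\<tau>, \<partial>_{g\<tau>}) j_g(\<tau>)^k.\<close>
definition slash :: "int \<Rightarrow> sl2 \<Rightarrow> (fser \<Rightarrow> fser) \<Rightarrow> fser \<Rightarrow> fser" where
  "slash k g P f = (\<lambda>\<beta> \<tau>. jfac g \<tau> powi (-k) *
      P (\<lambda>\<beta>' w. jfac g (moeb (sl_inv g) w) powi k * f \<beta>' (moeb (sl_inv g) w)) \<beta> (moeb g \<tau>))"

definition hol_ser :: "nat \<Rightarrow> complex set \<Rightarrow> fser \<Rightarrow> bool" where
  "hol_ser n V f \<longleftrightarrow> (\<forall>\<beta>\<in>multi n. f \<beta> holomorphic_on V) \<and> (\<forall>\<beta>. \<beta> \<notin> multi n \<longrightarrow> f \<beta> = (\<lambda>_. 0))"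

definition op_eq :: "nat \<Rightarrow> (fser \<Rightarrow> fser) \<Rightarrow> (fser \<Rightarrow> fser) \<Rightarrow> bool" where
  "op_eq n P Q \<longleftrightarrow> (\<forall>f. hol_ser n upper_half f \<longrightarrow>
      (\<forall>\<beta>\<in>multi n. \<forall>\<tau>\<in>upper_half. P f \<beta> \<tau> = Q f \<beta> \<tau>))"

text \<open>A formal deformation cocycle: A_g = exp(LA g) with LA g in d_k^\<rho>.\<close>
definition deform_cocycle :: "nat \<Rightarrow> int \<Rightarrow> sl2 set \<Rightarrow> (sl2 \<Rightarrow> mi \<Rightarrow> complex \<times> complex \<times> complex) \<Rightarrow> bool" where
  "deform_cocycle n k G LA \<longleftrightarrow>
     (\<forall>g\<in>G. LA g \<in> dk_rho) \<and>
     (\<forall>g\<in>G. \<forall>h\<in>G. op_eq n (expop n k (LA (sl_mult g h)))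
                           (slash k h (expop n k (LA g)) \<circ> expop n k (LA h)))"

text \<open>Equivalence: \<tilde>A_g = (C||_k g) A_g C^{-1} with C = exp(Y), C^{-1} = exp(-Y), Y in d_k^\<rho>.\<close>
definition cocycle_equiv :: "nat \<Rightarrow> int \<Rightarrow> sl2 set \<Rightarrow> (sl2 \<Rightarrow> mi \<Rightarrow> complex \<times> complex \<times> complex)
     \<Rightarrow> (sl2 \<Rightarrow> mi \<Rightarrow> complex \<times> complex \<times> complex) \<Rightarrow> bool" where
  "cocycle_equiv n k G LA LB \<longleftrightarrow>
     (\<exists>Y\<in>dk_rho. \<forall>g\<in>G. op_eq n (expop n k (LB g))
         (slash k g (expop n k Y) \<circ> expop n k (LA g) \<circ> expop n k (\<lambda>\<alpha>. - (Y \<alpha>))))"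

text \<open>Open sets U of Y_\<Gamma> = \<Gamma>\H correspond (via V = \<pi>^{-1}(U)) to \<Gamma>-invariant open subsets of H.\<close>
definition inv_open :: "sl2 set \<Rightarrow> complex set \<Rightarrow> bool" where
  "inv_open G V \<longleftrightarrow> open V \<and> V \<subseteq> upper_half \<and> (\<forall>g\<in>G. moeb g ` V \<subseteq> V)"

text \<open>Sections over U, represented as series on V = \<pi>^{-1}(U), extended by 0 outside V.\<close>
definition sections :: "nat \<Rightarrow> int \<Rightarrow> sl2 set \<Rightarrow> (sl2 \<Rightarrow> mi \<Rightarrow> complex \<times> complex \<times> complex) \<Rightarrow> complex set \<Rightarrow> fser set" where
  "sections n k G LA V = {f. hol_ser n V f \<and> (\<forall>\<beta> \<tau>. \<tau> \<notin> V \<longrightarrow> f \<beta> \<tau> = 0) \<and>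
      (\<forall>g\<in>G. \<forall>\<beta>\<in>multi n. \<forall>\<tau>\<in>V. jfac g \<tau> powi (-k) * f \<beta> (moeb g \<tau>) = expop n k (LA g) f \<beta> \<tau>)}"

definition ser_add :: "fser \<Rightarrow> fser \<Rightarrow> fser" where
  "ser_add f f' = (\<lambda>\<beta> \<tau>. f \<beta> \<tau> + f' \<beta> \<tau>)"

definition res :: "complex set \<Rightarrow> fser \<Rightarrow> fser" where
  "res W f = (\<lambda>\<beta> \<tau>. if \<tau> \<in> W then f \<beta> \<tau> else 0)"

definition sheaf_iso :: "nat \<Rightarrow> sl2 set \<Rightarrow> (complex set \<Rightarrow> fser set) \<Rightarrow> (complex set \<Rightarrow> fser set) \<Rightarrow> bool" where
  "sheaf_iso n G F1 F2 \<longleftrightarrow> (\<exists>\<phi> :: complex set \<Rightarrow> fser \<Rightarrow> fser.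
     (\<forall>V. inv_open G V \<longrightarrow>
        bij_betw (\<phi> V) (F1 V) (F2 V) \<and>
        (\<forall>f\<in>F1 V. \<forall>f'\<in>F1 V. \<phi> V (ser_add f f') = ser_add (\<phi> V f) (\<phi> V f')) \<and>
        (\<forall>s. \<forall>f\<in>F1 V. \<phi> V (ps_scale n s f) = ps_scale n s (\<phi> V f))) \<and>
     (\<forall>V W. inv_open G V \<and> inv_open G W \<and> W \<subseteq> V \<longrightarrow>
        (\<forall>f\<in>F1 V. \<phi> W (res W f) = res W (\<phi> V f))))"

end

theory Submission
  imports Defs "HOL-Complex_Analysis.Complex_Analysis"
begin
lemma lower_multi: "\<alpha> \<in> lower n \<gamma> \<Longrightarrow> \<alpha> \<in> multi n"
  by (simp add: lower_def)

lemma finite_lower: "finite (lower n \<gamma>)"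
proof -
  have "lower n \<gamma> \<subseteq> (\<lambda>f i. if i < n then f i else 0) ` PiE {..<n} (\<lambda>i. {0..\<gamma> i})"
  proof
    fix \<alpha> assume a: "\<alpha> \<in> lower n \<gamma>"
    have e: "\<alpha> = (\<lambda>i. if i < n then restrict \<alpha> {..<n} i else 0)"
      using a unfolding lower_def multi_def fun_eq_iff by simp
    have m: "restrict \<alpha> {..<n} \<in> PiE {..<n} (\<lambda>i. {0..\<gamma> i})"
      using a unfolding restrict_PiE_iff lower_def by simp
    show "\<alpha> \<in> (\<lambda>f i. if i < n then f i else 0) ` PiE {..<n} (\<lambda>i. {0..\<gamma> i})"
    proof (rule image_eqI[where x="restrict \<alpha> {..<n}"])
      show "restrict \<alpha> {..<n} \<in> PiE {..<n} (\<lambda>i. {0..\<gamma> i})" by (rule m)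
      show "\<alpha> = (\<lambda>f i. if i < n then f i else 0) (restrict \<alpha> {..<n})"
        using e by simp
    qed
  qed
  moreover have "finite (PiE {..<n} (\<lambda>i. {0..\<gamma> i}))"
    by (rule finite_PiE) auto
  ultimately show ?thesis using finite_subset by blast
qed

lemma diff_multi: "\<beta> \<in> multi n \<Longrightarrow> mi_diff \<beta> \<alpha> \<in> multi n"
  by (simp add: multi_def mi_diff_def)

lemma diff_not_multi: "\<beta> \<notin> multi n \<Longrightarrow> \<alpha> \<in> multi n \<Longrightarrow> mi_diff \<beta> \<alpha> \<notin> multi n"
  by (auto simp: multi_def mi_diff_def)

lemma diff_lower: "\<beta> \<in> lower n \<gamma> \<Longrightarrow> mi_diff \<beta> \<alpha> \<in> lower n \<gamma>"
proof -
  assume b: "\<beta> \<in> lower n \<gamma>"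
  have "\<beta> i - \<alpha> i \<le> \<gamma> i" for i
  proof -
    have "\<beta> i \<le> \<gamma> i" using b by (simp add: lower_def)
    then show ?thesis by linarith
  qed
  moreover have "mi_diff \<beta> \<alpha> \<in> multi n"
    using b by (intro diff_multi lower_multi)
  ultimately show ?thesis by (simp add: lower_def mi_diff_def)
qed

lemma lower_trans: "\<beta> \<in> lower n \<gamma> \<Longrightarrow> \<alpha> \<in> lower n \<beta> \<Longrightarrow> \<alpha> \<in> lower n \<gamma>"
  unfolding lower_def using le_trans by blast

lemma mdeg_mono: "\<alpha> \<in> lower n \<beta> \<Longrightarrow> mdeg n \<alpha> \<le> mdeg n \<beta>"
  unfolding mdeg_def lower_def by (auto intro: sum_mono)

lemma mdeg_diff: "\<alpha> \<in> lower n \<beta> \<Longrightarrow> mdeg n (mi_diff \<beta> \<alpha>) = mdeg n \<beta> - mdeg n \<alpha>"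
proof -
  assume a: "\<alpha> \<in> lower n \<beta>"
  have "mdeg n (mi_diff \<beta> \<alpha>) + mdeg n \<alpha> = mdeg n \<beta>"
    unfolding mdeg_def mi_diff_def sum.distrib[symmetric]
    using a by (intro sum.cong) (auto simp: lower_def)
  then show ?thesis by linarith
qed

lemma mdeg_pos: "\<alpha> \<in> multi n \<Longrightarrow> \<alpha> \<noteq> (\<lambda>_. 0) \<Longrightarrow> mdeg n \<alpha> \<ge> 1"
proof -
  assume a: "\<alpha> \<in> multi n" "\<alpha> \<noteq> (\<lambda>_. 0)"
  then obtain i where i: "\<alpha> i \<noteq> 0" by auto
  with a have "i < n" by (auto simp: multi_def)
  then have "\<alpha> i \<le> mdeg n \<alpha>" unfolding mdeg_def
    by (intro member_le_sum) auto
  with i show ?thesis by simp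
qed

lemma mdeg_less: "\<alpha> \<in> lower n \<beta> - {\<lambda>_. 0} \<Longrightarrow> mdeg n (mi_diff \<beta> \<alpha>) < mdeg n \<beta>"
  using mdeg_diff[of \<alpha> n \<beta>] mdeg_pos[of \<alpha> n] mdeg_mono[of \<alpha> n \<beta>] lower_multi[of \<alpha> n \<beta>]
  by auto

lemma zero_lower: "\<gamma> \<in> multi n \<Longrightarrow> (\<lambda>_. 0) \<in> lower n \<gamma>"
  by (auto simp: lower_def multi_def)

lemma self_lower: "\<gamma> \<in> multi n \<Longrightarrow> \<gamma> \<in> lower n \<gamma>"
  by (auto simp: lower_def)

lemma diff_zero [simp]: "mi_diff \<gamma> (\<lambda>_. 0) = \<gamma>"
  by (simp add: mi_diff_def)

definition flat :: "complex set \<Rightarrow> complex \<Rightarrow> nat \<Rightarrow> (complex \<Rightarrow> complex) \<Rightarrow> bool" where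
  "flat S \<tau> M h \<longleftrightarrow> (\<exists>e. e holomorphic_on S \<and> (\<forall>w\<in>S. h w = (w - \<tau>)^M * e w))"

lemma flat_zero: "flat S \<tau> M (\<lambda>_. 0)"
  unfolding flat_def by (rule exI[of _ "\<lambda>_. 0"]) (auto intro: holomorphic_intros)

lemma flat_cong: "flat S \<tau> M h \<Longrightarrow> (\<And>w. w \<in> S \<Longrightarrow> h w = h' w) \<Longrightarrow> flat S \<tau> M h'"
  unfolding flat_def by auto

lemma flat_subset: "flat S \<tau> M h \<Longrightarrow> T \<subseteq> S \<Longrightarrow> flat T \<tau> M h"
  unfolding flat_def by (meson holomorphic_on_subset subsetD)

lemma flat_add: "flat S \<tau> M h1 \<Longrightarrow> flat S \<tau> M h2 \<Longrightarrow> flat S \<tau> M (\<lambda>w. h1 w + h2 w)"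
proof -
  assume "flat S \<tau> M h1" "flat S \<tau> M h2"
  then obtain e1 e2 where "e1 holomorphic_on S" "\<forall>w\<in>S. h1 w = (w - \<tau>)^M * e1 w"
     "e2 holomorphic_on S" "\<forall>w\<in>S. h2 w = (w - \<tau>)^M * e2 w" unfolding flat_def by blast
  then show ?thesis unfolding flat_def
    by (intro exI[of _ "\<lambda>w. e1 w + e2 w"]) (auto intro: holomorphic_intros simp: distrib_left)
qed

lemma flat_mult: "g holomorphic_on S \<Longrightarrow> flat S \<tau> M h \<Longrightarrow> flat S \<tau> M (\<lambda>w. g w * h w)"
proof -
  assume g: "g holomorphic_on S" and "flat S \<tau> M h"
  then obtain e where "e holomorphic_on S" "\<forall>w\<in>S. h w = (w - \<tau>)^M * e w"
    unfolding flat_def by blast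
  with g show ?thesis unfolding flat_def
    by (intro exI[of _ "\<lambda>w. g w * e w"]) (auto intro: holomorphic_intros)
qed

lemma flat_sum: "finite A \<Longrightarrow> (\<And>a. a \<in> A \<Longrightarrow> flat S \<tau> M (h a)) \<Longrightarrow> flat S \<tau> M (\<lambda>w. \<Sum>a\<in>A. h a w)"
proof (induction A rule: finite_induct)
  case empty
  then show ?case using flat_zero by simp
next
  case (insert x F)
  then have "flat S \<tau> M (\<lambda>w. h x w + (\<Sum>a\<in>F. h a w))"
    by (intro flat_add) auto
  then show ?case using insert by simp
qed

lemma flat_mono: "M' \<le> M \<Longrightarrow> flat S \<tau> M h \<Longrightarrow> flat S \<tau> M' h"
proof -
  assume le: "M' \<le> M" and "flat S \<tau> M h"
  then obtain e where e: "e holomorphic_on S" "\<forall>w\<in>S. h w = (w - \<tau>)^M * e w"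
    unfolding flat_def by blast
  have "(w - \<tau>)^M = (w - \<tau>)^M' * (w - \<tau>)^(M - M')" for w
    using le by (metis le_add_diff_inverse power_add)
  with e show ?thesis unfolding flat_def
    by (intro exI[of _ "\<lambda>w. (w - \<tau>)^(M - M') * e w"]) (auto intro!: holomorphic_intros)
qed

lemma flat_val: "flat S \<tau> (Suc M) h \<Longrightarrow> \<tau> \<in> S \<Longrightarrow> h \<tau> = 0"
  unfolding flat_def by auto

lemma flat_deriv:
  assumes S: "open S" and u: "u holomorphic_on S" and f: "flat S \<tau> (Suc M) u"
  shows "flat S \<tau> M (deriv u)"
proof -
  obtain e where e: "e holomorphic_on S" "\<forall>w\<in>S. u w = (w - \<tau>)^(Suc M) * e w"
    using f unfolding flat_def by blast
  have "deriv u w = (w - \<tau>)^M * (of_nat (Suc M) * e w + (w - \<tau>) * deriv e w)" if w: "w \<in> S" for w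
  proof -
    have "deriv u w = deriv (\<lambda>w. (w - \<tau>)^(Suc M) * e w) w"
      by (rule complex_derivative_transform_within_open[OF u _ S w])
         (use e in \<open>auto intro!: holomorphic_intros\<close>)
    also have "\<dots> = (w - \<tau>)^(Suc M) * deriv e w + of_nat (Suc M) * (w - \<tau>)^M * e w"
    proof (rule DERIV_imp_deriv)
      have de: "(e has_field_derivative deriv e w) (at w)"
        using holomorphic_derivI[OF e(1) S w] by simp
      show "((\<lambda>w. (w - \<tau>) ^ Suc M * e w) has_field_derivative
          (w - \<tau>) ^ Suc M * deriv e w + of_nat (Suc M) * (w - \<tau>) ^ M * e w) (at w)"
        by (rule derivative_eq_intros refl de | simp)+
    qed
    also have "\<dots> = (w - \<tau>)^M * (of_nat (Suc M) * e w + (w - \<tau>) * deriv e w)"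
      by (simp add: algebra_simps)
    finally show ?thesis .
  qed
  then show ?thesis unfolding flat_def
    by (intro exI[of _ "\<lambda>w. of_nat (Suc M) * e w + (w - \<tau>) * deriv e w"])
       (use e S in \<open>auto intro!: holomorphic_intros\<close>)
qed

lemma flat_deriv_diff:
  assumes S: "open S" and u: "u holomorphic_on S" and u': "u' holomorphic_on S"
    and f: "flat S \<tau> (Suc M) (\<lambda>w. u w - u' w)"
  shows "flat S \<tau> M (\<lambda>w. deriv u w - deriv u' w)"
proof -
  have "flat S \<tau> M (deriv (\<lambda>w. u w - u' w))"
    by (rule flat_deriv[OF S _ f]) (use u u' in \<open>auto intro: holomorphic_intros\<close>)
  then show ?thesis
    by (rule flat_cong) (use u u' S in \<open>auto intro!: deriv_diff holomorphic_on_imp_differentiable_at\<close>)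
qed

lemma apply_dk_hol:
  assumes "open S" "u holomorphic_on S"
  shows "apply_dk k t u holomorphic_on S"
proof -
  obtain a b c where t: "t = (a,b,c)" by (cases t) auto
  have e: "apply_dk k (a,b,c) u = (\<lambda>w. 2 * (a + b*w + c*w^2) * deriv u w + of_int k * (b + 2*c*w) * u w)"
    by (rule ext) simp
  show ?thesis unfolding t e using assms
    by (auto intro!: holomorphic_intros)
qed

lemma apply_dk_diff:
  assumes S: "open S" and u: "u holomorphic_on S" and u': "u' holomorphic_on S"
    and f: "flat S \<tau> (Suc M) (\<lambda>w. u w - u' w)"
  shows "flat S \<tau> M (\<lambda>w. apply_dk k t u w - apply_dk k t u' w)"
proof -
  obtain a b c where t: "t = (a,b,c)" by (cases t) auto
  have "flat S \<tau> M (\<lambda>w. (2 * (a + b*w + c*w^2)) * (deriv u w - deriv u' w)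
           + (of_int k * (b + 2*c*w)) * (u w - u' w))"
    by (intro flat_add flat_mult flat_deriv_diff[OF S u u' f] flat_mono[OF _ f])
       (auto intro!: holomorphic_intros)
  then show ?thesis unfolding t
    by (rule flat_cong) (simp add: algebra_simps)
qed

definition agrr :: "nat \<Rightarrow> mi \<Rightarrow> nat \<Rightarrow> complex \<Rightarrow> real \<Rightarrow> fser \<Rightarrow> fser \<Rightarrow> bool" where
  "agrr n \<gamma> M \<tau> r f f' \<longleftrightarrow> (\<forall>\<beta>\<in>lower n \<gamma>. f \<beta> holomorphic_on ball \<tau> r \<and> f' \<beta> holomorphic_on ball \<tau> r
      \<and> flat (ball \<tau> r) \<tau> M (\<lambda>w. f \<beta> w - f' \<beta> w))"

lemma agrr_mono: "M' \<le> M \<Longrightarrow> agrr n \<gamma> M \<tau> r f f' \<Longrightarrow> agrr n \<gamma> M' \<tau> r f f'"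
  unfolding agrr_def using flat_mono by blast

lemma agrr_shrink: "r' \<le> r \<Longrightarrow> agrr n \<gamma> M \<tau> r f f' \<Longrightarrow> agrr n \<gamma> M \<tau> r' f f'"
proof -
  assume le: "r' \<le> r" and a: "agrr n \<gamma> M \<tau> r f f'"
  have sub: "ball \<tau> r' \<subseteq> ball \<tau> r" using le by (rule subset_ball)
  show ?thesis using a unfolding agrr_def
    using holomorphic_on_subset[OF _ sub] flat_subset[OF _ sub] by blast
qed

lemma agrr_eq:
  assumes "\<And>\<beta>. \<beta> \<in> lower n \<gamma> \<Longrightarrow> f \<beta> holomorphic_on ball \<tau> r \<and> f' \<beta> holomorphic_on ball \<tau> r
      \<and> (\<forall>w\<in>ball \<tau> r. f \<beta> w = f' \<beta> w)"
  shows "agrr n \<gamma> M \<tau> r f f'"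
  unfolding agrr_def using assms by (auto intro: flat_cong[OF flat_zero])

lemma Xop_apply: "Xop n k X f \<beta> w = (\<Sum>\<alpha>\<in>lower n \<beta> - {\<lambda>_. 0}. apply_dk k (X \<alpha>) (f (mi_diff \<beta> \<alpha>)) w)"
  by (simp add: Xop_def)

lemma Xop_hol:
  assumes S: "open S" and \<beta>: "\<beta> \<in> lower n \<gamma>" and f: "\<And>\<beta>. \<beta> \<in> lower n \<gamma> \<Longrightarrow> f \<beta> holomorphic_on S"
  shows "Xop n k X f \<beta> holomorphic_on S"
proof -
  have "(\<lambda>w. \<Sum>\<alpha>\<in>lower n \<beta> - {\<lambda>_. 0}. apply_dk k (X \<alpha>) (f (mi_diff \<beta> \<alpha>)) w) holomorphic_on S"
    by (intro holomorphic_on_sum apply_dk_hol S f diff_lower \<beta>)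
  then show ?thesis by (simp add: Xop_def)
qed

lemma Xop_agr: "agrr n \<gamma> (Suc M) \<tau> r f f' \<Longrightarrow> agrr n \<gamma> M \<tau> r (Xop n k X f) (Xop n k X f')"
proof -
  assume a: "agrr n \<gamma> (Suc M) \<tau> r f f'"
  show ?thesis unfolding agrr_def
  proof (intro ballI conjI)
    fix \<beta> assume \<beta>: "\<beta> \<in> lower n \<gamma>"
    show "Xop n k X f \<beta> holomorphic_on ball \<tau> r" "Xop n k X f' \<beta> holomorphic_on ball \<tau> r"
      using a \<beta> by (auto intro!: Xop_hol simp: agrr_def)
    have "flat (ball \<tau> r) \<tau> M (\<lambda>w. \<Sum>\<alpha>\<in>lower n \<beta> - {\<lambda>_. 0}.
        apply_dk k (X \<alpha>) (f (mi_diff \<beta> \<alpha>)) w - apply_dk k (X \<alpha>) (f' (mi_diff \<beta> \<alpha>)) w)"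
      using a diff_lower[OF \<beta>] finite_lower
      by (intro flat_sum apply_dk_diff) (auto simp: agrr_def)
    then show "flat (ball \<tau> r) \<tau> M (\<lambda>w. Xop n k X f \<beta> w - Xop n k X f' \<beta> w)"
      by (rule flat_cong) (simp add: Xop_apply sum_subtractf)
  qed
qed

lemma Xop_pow_agr: "agrr n \<gamma> (M + m) \<tau> r f f' \<Longrightarrow>
    agrr n \<gamma> M \<tau> r ((Xop n k X ^^ m) f) ((Xop n k X ^^ m) f')"
proof (induction m arbitrary: M)
  case 0
  then show ?case by simp
next
  case (Suc m)
  then have "agrr n \<gamma> (Suc M) \<tau> r ((Xop n k X ^^ m) f) ((Xop n k X ^^ m) f')"
    by (intro Suc.IH) (simp add: add.commute add_Suc_right)
  then show ?case by (simp add: Xop_agr)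
qed

lemma expop_apply: "expop n k X f \<beta> w = (\<Sum>m\<le>mdeg n \<beta>. (Xop n k X ^^ m) f \<beta> w / of_nat (fact m))"
  by (simp add: expop_def)

lemma expop_agr:
  assumes a: "agrr n \<gamma> (M + mdeg n \<gamma>) \<tau> r f f'"
  shows "agrr n \<gamma> M \<tau> r (expop n k X f) (expop n k X f')"
  unfolding agrr_def
proof (intro ballI conjI)
  fix \<beta> assume \<beta>: "\<beta> \<in> lower n \<gamma>"
  have pw: "agrr n \<gamma> M \<tau> r ((Xop n k X ^^ m) f) ((Xop n k X ^^ m) f')" if m: "m \<le> mdeg n \<beta>" for m
  proof -
    have mm: "m \<le> mdeg n \<gamma>" using m mdeg_mono[OF \<beta>] by simp
    then have "agrr n \<gamma> ((M + mdeg n \<gamma> - m) + m) \<tau> r f f'" using a by simp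
    then have "agrr n \<gamma> (M + mdeg n \<gamma> - m) \<tau> r ((Xop n k X ^^ m) f) ((Xop n k X ^^ m) f')"
      by (rule Xop_pow_agr)
    then show ?thesis by (rule agrr_mono[rotated]) (use mm in simp)
  qed
  have "(\<lambda>w. \<Sum>m\<le>mdeg n \<beta>. (Xop n k X ^^ m) f \<beta> w / of_nat (fact m)) holomorphic_on ball \<tau> r"
    using pw \<beta> by (intro holomorphic_on_sum holomorphic_on_divide) (auto simp: agrr_def intro: holomorphic_intros)
  then show "expop n k X f \<beta> holomorphic_on ball \<tau> r" by (simp add: expop_def)
  have "(\<lambda>w. \<Sum>m\<le>mdeg n \<beta>. (Xop n k X ^^ m) f' \<beta> w / of_nat (fact m)) holomorphic_on ball \<tau> r"
    using pw \<beta> by (intro holomorphic_on_sum holomorphic_on_divide) (auto simp: agrr_def intro: holomorphic_intros)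
  then show "expop n k X f' \<beta> holomorphic_on ball \<tau> r" by (simp add: expop_def)
  have "flat (ball \<tau> r) \<tau> M (\<lambda>w. \<Sum>m\<le>mdeg n \<beta>. (1 / of_nat (fact m)) *
       ((Xop n k X ^^ m) f \<beta> w - (Xop n k X ^^ m) f' \<beta> w))"
    using pw \<beta> by (intro flat_sum flat_mult) (auto simp: agrr_def intro: holomorphic_intros)
  then show "flat (ball \<tau> r) \<tau> M (\<lambda>w. expop n k X f \<beta> w - expop n k X f' \<beta> w)"
    by (rule flat_cong) (simp add: expop_apply sum_subtractf[symmetric] diff_divide_distrib)
qed

lemma open_H: "open upper_half"
  unfolding upper_half_def by (simp add: open_halfspace_Im_gt)

lemma jfac_eq: "jfac g = (\<lambda>w. of_real (fst (snd (snd g))) * w + of_real (snd (snd (snd g))))"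
  by (cases g) auto

lemma jfac_hol: "jfac g holomorphic_on S"
  unfolding jfac_eq by (auto intro!: holomorphic_intros)

lemma jfac_nz: "g \<in> SL2R \<Longrightarrow> \<tau> \<in> upper_half \<Longrightarrow> jfac g \<tau> \<noteq> 0"
proof -
  assume g: "g \<in> SL2R" and t: "\<tau> \<in> upper_half"
  obtain a b c d where gd: "g = (a,b,c,d)" by (cases g) auto
  show ?thesis
  proof
    assume "jfac g \<tau> = 0"
    then have "of_real c * \<tau> + of_real d = 0" by (simp add: gd)
    then have "Im (of_real c * \<tau> + of_real d) = 0" "Re (of_real c * \<tau> + of_real d) = 0" by simp_all
    then have "c * Im \<tau> = 0" "c * Re \<tau> + d = 0" by simp_all
    with t have "c = 0" "d = 0" by (auto simp: upper_half_def)
    with g gd show False by (simp add: SL2R_def)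
  qed
qed

lemma moeb_eq: "moeb g w = (of_real (fst g) * w + of_real (fst (snd g))) / jfac g w"
  by (cases g) auto

lemma moeb_hol: "g \<in> SL2R \<Longrightarrow> moeb g holomorphic_on upper_half"
proof -
  assume g: "g \<in> SL2R"
  have "(\<lambda>w. (of_real (fst g) * w + of_real (fst (snd g))) / jfac g w) holomorphic_on upper_half"
    using jfac_nz[OF g] by (intro holomorphic_intros jfac_hol) auto
  then show ?thesis by (simp add: moeb_eq[abs_def])
qed

lemma moeb_H: "g \<in> SL2R \<Longrightarrow> \<tau> \<in> upper_half \<Longrightarrow> moeb g \<tau> \<in> upper_half"
proof -
  assume g: "g \<in> SL2R" and t: "\<tau> \<in> upper_half"
  obtain a b c d where gd: "g = (a,b,c,d)" by (cases g) auto
  define y where "y = of_real c * \<tau> + of_real d"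
  define x where "x = of_real a * \<tau> + of_real b"
  have nz: "y \<noteq> 0" using jfac_nz[OF g t] by (simp add: gd y_def)
  then have pos: "(Re y)^2 + (Im y)^2 > 0"
    by (simp add: complex_eq_iff sum_power2_gt_zero_iff)
  have det: "a*d - b*c = 1" using g by (simp add: gd SL2R_def)
  have "Im (x / y) = (Im x * Re y - Re x * Im y) / ((Re y)^2 + (Im y)^2)"
    by (simp add: Im_divide)
  also have "Im x * Re y - Re x * Im y = Im \<tau> * (a*d - b*c)"
    by (simp add: x_def y_def algebra_simps)
  finally have "Im (x / y) = Im \<tau> / ((Re y)^2 + (Im y)^2)"
    using det by simp
  moreover have "moeb g \<tau> = x / y" by (simp add: gd x_def y_def)
  ultimately show ?thesis using pos t by (simp add: upper_half_def)
qed

lemma sl_inv_SL: "g \<in> SL2R \<Longrightarrow> sl_inv g \<in> SL2R"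
  by (cases g) (auto simp: SL2R_def algebra_simps)

lemma sl_inv_inv [simp]: "sl_inv (sl_inv g) = g"
  by (cases g) auto

lemma moeb_inv: "g \<in> SL2R \<Longrightarrow> \<tau> \<in> upper_half \<Longrightarrow> moeb (sl_inv g) (moeb g \<tau>) = \<tau>"
proof -
  assume g: "g \<in> SL2R" and t: "\<tau> \<in> upper_half"
  obtain a b c d where gd: "g = (a,b,c,d)" by (cases g) auto
  define J where "J = of_real c * \<tau> + of_real d"
  define X where "X = of_real a * \<tau> + of_real b"
  have nz: "J \<noteq> 0" using jfac_nz[OF g t] by (simp add: gd J_def)
  have det: "of_real a * of_real d - of_real b * of_real c = (1::complex)"
    using g by (simp add: gd SL2R_def) (metis of_real_1 of_real_diff of_real_mult)
  have e1: "of_real d * X - of_real b * J = \<tau> * (of_real a * of_real d - of_real b * of_real c)"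
    by (simp add: X_def J_def algebra_simps)
  have e2: "- of_real c * X + of_real a * J = (of_real a * of_real d - of_real b * of_real c)"
    by (simp add: X_def J_def algebra_simps)
  have n1: "of_real d * (X / J) - of_real b = \<tau> / J"
  proof -
    have "of_real d * (X / J) - of_real b = (of_real d * X - of_real b * J) / J"
      using nz by (simp add: field_simps)
    then show ?thesis using e1 det by simp
  qed
  have n2: "- of_real c * (X / J) + of_real a = 1 / J"
  proof -
    have "- of_real c * (X / J) + of_real a = (- of_real c * X + of_real a * J) / J"
      using nz by (simp add: field_simps)
    then show ?thesis using e2 det by simp
  qed
  have "moeb (sl_inv g) (moeb g \<tau>) = (of_real d * (X / J) - of_real b) / (- of_real c * (X / J) + of_real a)"
    by (simp add: gd X_def J_def)
  also have "\<dots> = \<tau>" unfolding n1 n2 using nz by simp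
  finally show ?thesis .
qed

lemma moeb_inv': "g \<in> SL2R \<Longrightarrow> w \<in> upper_half \<Longrightarrow> moeb g (moeb (sl_inv g) w) = w"
  using moeb_inv[OF sl_inv_SL, of g w] by simp

lemma moeb_diff:
  assumes g: "g \<in> SL2R" and w: "jfac g w \<noteq> 0" and t: "jfac g \<tau> \<noteq> 0"
  shows "moeb g w - moeb g \<tau> = (w - \<tau>) * (1 / (jfac g w * jfac g \<tau>))"
proof -
  obtain a b c d where gd: "g = (a,b,c,d)" by (cases g) auto
  have det: "of_real a * of_real d - of_real b * of_real c = (1::complex)"
    using g by (simp add: gd SL2R_def) (metis of_real_1 of_real_diff of_real_mult)
  have w': "of_real c * w + of_real d \<noteq> 0" and t': "of_real c * \<tau> + of_real d \<noteq> 0"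
    using w t by (simp_all add: gd)
  have "moeb g w - moeb g \<tau> = ((of_real a * w + of_real b) * (of_real c * \<tau> + of_real d)
        - (of_real a * \<tau> + of_real b) * (of_real c * w + of_real d)) / (jfac g w * jfac g \<tau>)"
    using w' t' by (simp add: gd field_simps)
  also have "(of_real a * w + of_real b) * (of_real c * \<tau> + of_real d)
        - (of_real a * \<tau> + of_real b) * (of_real c * w + of_real d)
      = (w - \<tau>) * (of_real a * of_real d - of_real b * of_real c)"
    by (simp add: algebra_simps)
  finally show ?thesis using det by simp
qed

lemma moeb_ball:
  assumes g: "g \<in> SL2R" and t: "\<tau> \<in> upper_half" and r: "r > 0"
  shows "\<exists>\<rho>>0. ball \<tau> \<rho> \<subseteq> upper_half \<and> moeb g ` ball \<tau> \<rho> \<subseteq> ball (moeb g \<tau>) r"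
proof -
  have "continuous (at \<tau>) (moeb g)"
    using moeb_hol[OF g] open_H t
    by (meson continuous_on_eq_continuous_at holomorphic_on_imp_continuous_on)
  then obtain d where d: "d > 0" "moeb g ` ball \<tau> d \<subseteq> ball (moeb g \<tau>) r"
    using r unfolding continuous_at_ball by blast
  obtain d' where d': "d' > 0" "ball \<tau> d' \<subseteq> upper_half"
    using open_H t open_contains_ball by blast
  show ?thesis
    by (rule exI[of _ "min d d'"]) (use d d' in auto)
qed

lemma flat_pull:
  assumes ph: "\<phi> holomorphic_on ball \<tau> \<rho>" and im: "\<phi> ` ball \<tau> \<rho> \<subseteq> ball \<sigma> r"
    and ps: "\<psi> holomorphic_on ball \<tau> \<rho>" and eq: "\<And>w. w \<in> ball \<tau> \<rho> \<Longrightarrow> \<phi> w - \<sigma> = (w - \<tau>) * \<psi> w"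
    and f: "flat (ball \<sigma> r) \<sigma> M h"
  shows "flat (ball \<tau> \<rho>) \<tau> M (\<lambda>w. h (\<phi> w))"
proof -
  obtain e where e: "e holomorphic_on ball \<sigma> r" "\<forall>w\<in>ball \<sigma> r. h w = (w - \<sigma>)^M * e w"
    using f unfolding flat_def by blast
  have "(\<lambda>w. e (\<phi> w)) holomorphic_on ball \<tau> \<rho>"
    using holomorphic_on_compose_gen[OF ph e(1) im] by (simp add: o_def)
  then have "(\<lambda>w. \<psi> w ^ M * e (\<phi> w)) holomorphic_on ball \<tau> \<rho>"
    using ps by (auto intro!: holomorphic_intros)
  moreover have "h (\<phi> w) = (w - \<tau>)^M * (\<psi> w ^ M * e (\<phi> w))" if w: "w \<in> ball \<tau> \<rho>" for w
  proof -
    have "\<phi> w \<in> ball \<sigma> r" using im w by blast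
    then have "h (\<phi> w) = (\<phi> w - \<sigma>)^M * e (\<phi> w)" using e by auto
    also have "\<dots> = (w - \<tau>)^M * (\<psi> w ^ M * e (\<phi> w))" using eq[OF w] by (simp add: power_mult_distrib)
    finally show ?thesis .
  qed
  ultimately show ?thesis unfolding flat_def by blast
qed

lemma pull_agrr:
  assumes a: "agrr n \<gamma> M \<sigma> r F F'"
    and ph: "\<phi> holomorphic_on ball \<tau> \<rho>" and im: "\<phi> ` ball \<tau> \<rho> \<subseteq> ball \<sigma> r"
    and ps: "\<psi> holomorphic_on ball \<tau> \<rho>" and eq: "\<And>w. w \<in> ball \<tau> \<rho> \<Longrightarrow> \<phi> w - \<sigma> = (w - \<tau>) * \<psi> w"
    and m: "m holomorphic_on ball \<tau> \<rho>"
  shows "agrr n \<gamma> M \<tau> \<rho> (\<lambda>\<beta> w. m w * F \<beta> (\<phi> w)) (\<lambda>\<beta> w. m w * F' \<beta> (\<phi> w))"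
  unfolding agrr_def
proof (intro ballI conjI)
  fix \<beta> assume \<beta>: "\<beta> \<in> lower n \<gamma>"
  have hF: "F \<beta> holomorphic_on ball \<sigma> r" and hF': "F' \<beta> holomorphic_on ball \<sigma> r"
    and fl: "flat (ball \<sigma> r) \<sigma> M (\<lambda>w. F \<beta> w - F' \<beta> w)"
    using a \<beta> by (auto simp: agrr_def)
  have c1: "(\<lambda>w. F \<beta> (\<phi> w)) holomorphic_on ball \<tau> \<rho>"
    using holomorphic_on_compose_gen[OF ph hF im] by (simp add: o_def)
  have c2: "(\<lambda>w. F' \<beta> (\<phi> w)) holomorphic_on ball \<tau> \<rho>"
    using holomorphic_on_compose_gen[OF ph hF' im] by (simp add: o_def)
  show "(\<lambda>w. m w * F \<beta> (\<phi> w)) holomorphic_on ball \<tau> \<rho>" "(\<lambda>w. m w * F' \<beta> (\<phi> w)) holomorphic_on ball \<tau> \<rho>"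
    using c1 c2 m by (auto intro!: holomorphic_intros)
  have "flat (ball \<tau> \<rho>) \<tau> M (\<lambda>w. m w * (F \<beta> (\<phi> w) - F' \<beta> (\<phi> w)))"
    by (intro flat_mult m flat_pull[OF ph im ps eq fl]) auto
  then show "flat (ball \<tau> \<rho>) \<tau> M (\<lambda>w. m w * F \<beta> (\<phi> w) - m w * F' \<beta> (\<phi> w))"
    by (rule flat_cong) (simp add: algebra_simps)
qed

lemma moeb_pull:
  assumes g: "g \<in> SL2R" and t: "\<tau> \<in> upper_half" and r: "r > 0"
    and a: "agrr n \<gamma> M (moeb g \<tau>) r F F'"
    and m: "m holomorphic_on upper_half"
  shows "\<exists>\<rho>>0. ball \<tau> \<rho> \<subseteq> upper_half \<and>
     agrr n \<gamma> M \<tau> \<rho> (\<lambda>\<beta> w. m w * F \<beta> (moeb g w)) (\<lambda>\<beta> w. m w * F' \<beta> (moeb g w))"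
proof -
  obtain \<rho> where \<rho>: "\<rho> > 0" "ball \<tau> \<rho> \<subseteq> upper_half" "moeb g ` ball \<tau> \<rho> \<subseteq> ball (moeb g \<tau>) r"
    using moeb_ball[OF g t r] by blast
  have "agrr n \<gamma> M \<tau> \<rho> (\<lambda>\<beta> w. m w * F \<beta> (moeb g w)) (\<lambda>\<beta> w. m w * F' \<beta> (moeb g w))"
  proof (rule pull_agrr[OF a _ \<rho>(3), where \<psi>="\<lambda>w. 1 / (jfac g w * jfac g \<tau>)"])
    show "moeb g holomorphic_on ball \<tau> \<rho>" using moeb_hol[OF g] \<rho>(2) by (rule holomorphic_on_subset)
    show "(\<lambda>w. 1 / (jfac g w * jfac g \<tau>)) holomorphic_on ball \<tau> \<rho>"
      using \<rho>(2) jfac_nz[OF g] t by (intro holomorphic_intros jfac_hol) auto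
    show "moeb g w - moeb g \<tau> = (w - \<tau>) * (1 / (jfac g w * jfac g \<tau>))" if "w \<in> ball \<tau> \<rho>" for w
      using that \<rho>(2) jfac_nz[OF g] t by (intro moeb_diff g) auto
    show "m holomorphic_on ball \<tau> \<rho>" using m \<rho>(2) by (rule holomorphic_on_subset)
  qed
  with \<rho> show ?thesis by blast
qed

definition LOC :: "nat \<Rightarrow> (fser \<Rightarrow> fser) \<Rightarrow> bool" where
  "LOC n P \<longleftrightarrow> (\<forall>\<gamma>. \<exists>c. \<forall>\<tau>\<in>upper_half. \<forall>M r f f'. r > 0 \<longrightarrow> agrr n \<gamma> (M + c) \<tau> r f f'
      \<longrightarrow> (\<exists>r'>0. agrr n \<gamma> M \<tau> r' (P f) (P f')))"

lemma expop_LOC: "LOC n (expop n k X)"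
  unfolding LOC_def by (metis expop_agr)

lemma LOC_comp: "LOC n P \<Longrightarrow> LOC n Q \<Longrightarrow> LOC n (P \<circ> Q)"
  unfolding LOC_def
proof (intro allI)
  fix \<gamma>
  assume P: "\<forall>\<gamma>. \<exists>c. \<forall>\<tau>\<in>upper_half. \<forall>M r f f'. 0 < r \<longrightarrow> agrr n \<gamma> (M + c) \<tau> r f f' \<longrightarrow> (\<exists>r'>0. agrr n \<gamma> M \<tau> r' (P f) (P f'))"
    and Q: "\<forall>\<gamma>. \<exists>c. \<forall>\<tau>\<in>upper_half. \<forall>M r f f'. 0 < r \<longrightarrow> agrr n \<gamma> (M + c) \<tau> r f f' \<longrightarrow> (\<exists>r'>0. agrr n \<gamma> M \<tau> r' (Q f) (Q f'))"
  obtain c1 where c1: "\<forall>\<tau>\<in>upper_half. \<forall>M r f f'. 0 < r \<longrightarrow> agrr n \<gamma> (M + c1) \<tau> r f f' \<longrightarrow> (\<exists>r'>0. agrr n \<gamma> M \<tau> r' (P f) (P f'))"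
    using P by blast
  obtain c2 where c2: "\<forall>\<tau>\<in>upper_half. \<forall>M r f f'. 0 < r \<longrightarrow> agrr n \<gamma> (M + c2) \<tau> r f f' \<longrightarrow> (\<exists>r'>0. agrr n \<gamma> M \<tau> r' (Q f) (Q f'))"
    using Q by blast
  show "\<exists>c. \<forall>\<tau>\<in>upper_half. \<forall>M r f f'. 0 < r \<longrightarrow> agrr n \<gamma> (M + c) \<tau> r f f' \<longrightarrow> (\<exists>r'>0. agrr n \<gamma> M \<tau> r' ((P \<circ> Q) f) ((P \<circ> Q) f'))"
  proof (intro exI[of _ "c1 + c2"] ballI allI impI)
    fix \<tau> M r f f' assume t: "\<tau> \<in> upper_half" and r: "0 < r" and a: "agrr n \<gamma> (M + (c1 + c2)) \<tau> r f f'"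
    then have "agrr n \<gamma> ((M + c1) + c2) \<tau> r f f'" by (simp add: add.assoc)
    then obtain r1 where "r1 > 0" "agrr n \<gamma> (M + c1) \<tau> r1 (Q f) (Q f')" using c2 t r by blast
    then obtain r2 where "r2 > 0" "agrr n \<gamma> M \<tau> r2 (P (Q f)) (P (Q f'))" using c1 t by blast
    then show "\<exists>r'>0. agrr n \<gamma> M \<tau> r' ((P \<circ> Q) f) ((P \<circ> Q) f')" by auto
  qed
qed

lemma LOC_val:
  assumes P: "LOC n P" and g: "\<gamma> \<in> multi n" and t: "\<tau> \<in> upper_half" and r: "r > 0"
    and a: "\<And>M. agrr n \<gamma> M \<tau> r f f'"
  shows "P f \<gamma> \<tau> = P f' \<gamma> \<tau>"
proof -
  obtain c where c: "\<forall>\<tau>\<in>upper_half. \<forall>M r f f'. 0 < r \<longrightarrow> agrr n \<gamma> (M + c) \<tau> r f f' \<longrightarrow> (\<exists>r'>0. agrr n \<gamma> M \<tau> r' (P f) (P f'))"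
    using P unfolding LOC_def by blast
  then obtain r' where "r' > 0" "agrr n \<gamma> (Suc 0) \<tau> r' (P f) (P f')"
    using a[of "Suc 0 + c"] t r by blast
  then have "flat (ball \<tau> r') \<tau> (Suc 0) (\<lambda>w. P f \<gamma> w - P f' \<gamma> w)"
    using self_lower[OF g] by (auto simp: agrr_def)
  from flat_val[OF this] \<open>r' > 0\<close> show ?thesis by simp
qed

lemma jfac_comp_hol: "g \<in> SL2R \<Longrightarrow> h \<in> SL2R \<Longrightarrow> (\<lambda>w. jfac g (moeb h w) powi k) holomorphic_on upper_half"
proof -
  assume g: "g \<in> SL2R" and h: "h \<in> SL2R"
  have "(jfac g \<circ> moeb h) holomorphic_on upper_half"
    by (rule holomorphic_on_compose[OF moeb_hol[OF h] jfac_hol])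
  then have "(\<lambda>w. jfac g (moeb h w)) holomorphic_on upper_half" by (simp add: o_def)
  then show ?thesis
    using jfac_nz[OF g] moeb_H[OF h] by (intro holomorphic_on_power_int) auto
qed

lemma jfac_powi_hol: "g \<in> SL2R \<Longrightarrow> (\<lambda>w. jfac g w powi k) holomorphic_on upper_half"
  using jfac_nz[OF _] by (intro holomorphic_on_power_int jfac_hol) auto

lemma slash_LOC:
  assumes g: "g \<in> SL2R" and P: "LOC n P"
  shows "LOC n (slash k g P)"
  unfolding LOC_def
proof
  fix \<gamma>
  obtain c where c: "\<forall>\<tau>\<in>upper_half. \<forall>M r f f'. 0 < r \<longrightarrow> agrr n \<gamma> (M + c) \<tau> r f f' \<longrightarrow> (\<exists>r'>0. agrr n \<gamma> M \<tau> r' (P f) (P f'))"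
    using P unfolding LOC_def by blast
  show "\<exists>c. \<forall>\<tau>\<in>upper_half. \<forall>M r f f'. 0 < r \<longrightarrow> agrr n \<gamma> (M + c) \<tau> r f f' \<longrightarrow> (\<exists>r'>0. agrr n \<gamma> M \<tau> r' (slash k g P f) (slash k g P f'))"
  proof (intro exI[of _ c] ballI allI impI)
    fix \<tau> M r f f' assume t: "\<tau> \<in> upper_half" and r: "0 < r" and a: "agrr n \<gamma> (M + c) \<tau> r f f'"
    define gi where "gi = sl_inv g"
    have gi: "gi \<in> SL2R" using sl_inv_SL[OF g] by (simp add: gi_def)
    define \<sigma> where "\<sigma> = moeb g \<tau>"
    have s: "\<sigma> \<in> upper_half" using moeb_H[OF g t] by (simp add: \<sigma>_def)
    have a': "agrr n \<gamma> (M + c) (moeb gi \<sigma>) r f f'" using a moeb_inv[OF g t] by (simp add: \<sigma>_def gi_def)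
    obtain \<rho> where \<rho>: "\<rho> > 0" "agrr n \<gamma> (M + c) \<sigma> \<rho>
        (\<lambda>\<beta> w. jfac g (moeb gi w) powi k * f \<beta> (moeb gi w)) (\<lambda>\<beta> w. jfac g (moeb gi w) powi k * f' \<beta> (moeb gi w))"
      using moeb_pull[OF gi s r a' jfac_comp_hol[OF g gi]] by blast
    then obtain r' where r': "r' > 0" "agrr n \<gamma> M \<sigma> r'
        (P (\<lambda>\<beta> w. jfac g (moeb gi w) powi k * f \<beta> (moeb gi w))) (P (\<lambda>\<beta> w. jfac g (moeb gi w) powi k * f' \<beta> (moeb gi w)))"
      using c s by blast
    have "agrr n \<gamma> M (moeb g \<tau>) r'
        (P (\<lambda>\<beta> w. jfac g (moeb gi w) powi k * f \<beta> (moeb gi w))) (P (\<lambda>\<beta> w. jfac g (moeb gi w) powi k * f' \<beta> (moeb gi w)))"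
      using r' by (simp add: \<sigma>_def)
    from moeb_pull[OF g t r'(1) this jfac_powi_hol[OF g]]
    obtain \<rho>' where "\<rho>' > 0" "agrr n \<gamma> M \<tau> \<rho>'
       (\<lambda>\<beta> w. jfac g w powi (- k) * P (\<lambda>\<beta> w. jfac g (moeb gi w) powi k * f \<beta> (moeb gi w)) \<beta> (moeb g w))
       (\<lambda>\<beta> w. jfac g w powi (- k) * P (\<lambda>\<beta> w. jfac g (moeb gi w) powi k * f' \<beta> (moeb gi w)) \<beta> (moeb g w))"
      by blast
    then show "\<exists>r'>0. agrr n \<gamma> M \<tau> r' (slash k g P f) (slash k g P f')"
      unfolding slash_def gi_def by blast
  qed
qed

lemma taylor_poly:
  assumes h: "h holomorphic_on ball \<tau> r"
  shows "\<exists>p e. p holomorphic_on UNIV \<and> e holomorphic_on ball \<tau> r \<and> (\<forall>w\<in>ball \<tau> r. h w = p w + (w - \<tau>)^N * e w)"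
proof (induction N)
  case 0
  show ?case by (rule exI[of _ "\<lambda>_. 0"], rule exI[of _ h]) (use h in \<open>auto intro: holomorphic_intros\<close>)
next
  case (Suc N)
  then obtain p e where pe: "p holomorphic_on UNIV" "e holomorphic_on ball \<tau> r"
    "\<forall>w\<in>ball \<tau> r. h w = p w + (w - \<tau>)^N * e w" by blast
  show ?case
  proof (cases "r > 0")
    case False
    then have "ball \<tau> r = {}" by auto
    have "(\<lambda>_. 0::complex) holomorphic_on UNIV" "(\<lambda>_. 0::complex) holomorphic_on ball \<tau> r" by auto
    moreover have "\<forall>w\<in>ball \<tau> r. h w = 0 + (w - \<tau>)^Suc N * 0" using \<open>ball \<tau> r = {}\<close> by blast
    ultimately show ?thesis by blast
  next
    case True
    define e2 where "e2 = (\<lambda>z. if z = \<tau> then deriv e \<tau> else (e z - e \<tau>) / (z - \<tau>))"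
    have e2h: "e2 holomorphic_on ball \<tau> r"
      unfolding e2_def by (rule pole_lemma[OF pe(2)]) (use True in auto)
    have ee: "e w = e \<tau> + (w - \<tau>) * e2 w" for w
      by (cases "w = \<tau>") (auto simp: e2_def)
    have hp: "(\<lambda>w. p w + e \<tau> * (w - \<tau>) ^ N) holomorphic_on UNIV" using pe(1) by (auto intro!: holomorphic_intros)
    have eq: "\<forall>w\<in>ball \<tau> r. h w = (p w + e \<tau> * (w - \<tau>) ^ N) + (w - \<tau>) ^ Suc N * e2 w"
    proof
      fix w assume w: "w \<in> ball \<tau> r"
      have "h w = p w + (w - \<tau>)^N * (e \<tau> + (w - \<tau>) * e2 w)" using pe(3) w ee[of w] by simp
      then show "h w = (p w + e \<tau> * (w - \<tau>) ^ N) + (w - \<tau>) ^ Suc N * e2 w"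
        by (simp add: algebra_simps)
    qed
    show ?thesis using hp e2h eq by blast
  qed
qed

lemma transfer:
  assumes eq: "op_eq n P Q" and P: "LOC n P" and Q: "LOC n Q" and g: "\<gamma> \<in> multi n"
    and t: "\<tau> \<in> upper_half" and r: "r > 0"
    and h: "\<And>\<beta>. \<beta> \<in> lower n \<gamma> \<Longrightarrow> h \<beta> holomorphic_on ball \<tau> r"
  shows "P h \<gamma> \<tau> = Q h \<gamma> \<tau>"
proof -
  obtain cP where cP: "\<forall>\<tau>\<in>upper_half. \<forall>M r f f'. 0 < r \<longrightarrow> agrr n \<gamma> (M + cP) \<tau> r f f' \<longrightarrow> (\<exists>r'>0. agrr n \<gamma> M \<tau> r' (P f) (P f'))"
    using P unfolding LOC_def by blast
  obtain cQ where cQ: "\<forall>\<tau>\<in>upper_half. \<forall>M r f f'. 0 < r \<longrightarrow> agrr n \<gamma> (M + cQ) \<tau> r f f' \<longrightarrow> (\<exists>r'>0. agrr n \<gamma> M \<tau> r' (Q f) (Q f'))"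
    using Q unfolding LOC_def by blast
  define N where "N = Suc (cP + cQ)"
  have "\<forall>\<beta>. \<exists>p e. \<beta> \<in> lower n \<gamma> \<longrightarrow> (p holomorphic_on UNIV \<and> e holomorphic_on ball \<tau> r \<and> (\<forall>w\<in>ball \<tau> r. h \<beta> w = p w + (w - \<tau>)^N * e w))"
    using taylor_poly h by blast
  then obtain p e where pe: "\<And>\<beta>. \<beta> \<in> lower n \<gamma> \<Longrightarrow> p \<beta> holomorphic_on UNIV \<and> e \<beta> holomorphic_on ball \<tau> r \<and> (\<forall>w\<in>ball \<tau> r. h \<beta> w = p \<beta> w + (w - \<tau>)^N * e \<beta> w)"
    by metis
  define u where "u = (\<lambda>\<beta>. if \<beta> \<in> lower n \<gamma> then p \<beta> else (\<lambda>_. 0))"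
  have hu: "hol_ser n upper_half u"
    unfolding hol_ser_def u_def
    using pe by (auto intro: holomorphic_on_subset holomorphic_intros simp: lower_def)
  have ag: "agrr n \<gamma> N \<tau> r h u"
    unfolding agrr_def
  proof (intro ballI conjI)
    fix \<beta> assume b: "\<beta> \<in> lower n \<gamma>"
    show "h \<beta> holomorphic_on ball \<tau> r" by (rule h[OF b])
    show "u \<beta> holomorphic_on ball \<tau> r" using pe[OF b] b by (auto simp: u_def intro: holomorphic_on_subset)
    show "flat (ball \<tau> r) \<tau> N (\<lambda>w. h \<beta> w - u \<beta> w)"
      unfolding flat_def using pe[OF b] b by (intro exI[of _ "e \<beta>"]) (auto simp: u_def)
  qed
  have vP: "P h \<gamma> \<tau> = P u \<gamma> \<tau>"
  proof -
    have "agrr n \<gamma> (Suc 0 + cP) \<tau> r h u" by (rule agrr_mono[OF _ ag]) (simp add: N_def)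
    then obtain r' where "r' > 0" "agrr n \<gamma> (Suc 0) \<tau> r' (P h) (P u)" using cP t r by blast
    then have "flat (ball \<tau> r') \<tau> (Suc 0) (\<lambda>w. P h \<gamma> w - P u \<gamma> w)"
      using self_lower[OF g] by (auto simp: agrr_def)
    from flat_val[OF this] \<open>r' > 0\<close> show ?thesis by simp
  qed
  have vQ: "Q h \<gamma> \<tau> = Q u \<gamma> \<tau>"
  proof -
    have "agrr n \<gamma> (Suc 0 + cQ) \<tau> r h u" by (rule agrr_mono[OF _ ag]) (simp add: N_def)
    then obtain r' where "r' > 0" "agrr n \<gamma> (Suc 0) \<tau> r' (Q h) (Q u)" using cQ t r by blast
    then have "flat (ball \<tau> r') \<tau> (Suc 0) (\<lambda>w. Q h \<gamma> w - Q u \<gamma> w)"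
      using self_lower[OF g] by (auto simp: agrr_def)
    from flat_val[OF this] \<open>r' > 0\<close> show ?thesis by simp
  qed
  have "P u \<gamma> \<tau> = Q u \<gamma> \<tau>" using eq hu g t unfolding op_eq_def by blast
  with vP vQ show ?thesis by simp
qed

definition hv :: "complex set \<Rightarrow> fser \<Rightarrow> bool" where
  "hv V f \<longleftrightarrow> (\<forall>\<beta>. f \<beta> holomorphic_on V)"

definition zo :: "nat \<Rightarrow> fser \<Rightarrow> bool" where
  "zo n f \<longleftrightarrow> (\<forall>\<beta>. \<beta> \<notin> multi n \<longrightarrow> f \<beta> = (\<lambda>_. 0))"

definition down :: "mi \<Rightarrow> mi set" where
  "down \<gamma> = {\<beta>. \<forall>i. \<beta> i \<le> \<gamma> i}"

lemma down_diff: "\<beta> \<in> down \<gamma> \<Longrightarrow> mi_diff \<beta> \<alpha> \<in> down \<gamma>"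
proof -
  assume b: "\<beta> \<in> down \<gamma>"
  have "\<beta> i - \<alpha> i \<le> \<gamma> i" for i
  proof -
    have "\<beta> i \<le> \<gamma> i" using b by (simp add: down_def)
    then show ?thesis by linarith
  qed
  then show ?thesis by (simp add: down_def mi_diff_def)
qed

lemma self_down: "\<gamma> \<in> down \<gamma>"
  by (simp add: down_def)

lemma mdeg_down: "\<beta> \<in> down \<gamma> \<Longrightarrow> mdeg n \<beta> \<le> mdeg n \<gamma>"
  unfolding mdeg_def down_def by (auto intro: sum_mono)

lemma mdeg_diff_le: "mdeg n (mi_diff \<gamma> \<delta>) \<le> mdeg n \<gamma>"
  by (rule mdeg_down[OF down_diff[OF self_down]])

lemma apply_dk_zero [simp]: "apply_dk k t (\<lambda>_. 0) w = 0"
  by (cases t) simp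

lemma apply_dk_neg: "apply_dk k (- t) u w = - apply_dk k t u w"
  by (cases t) (simp add: algebra_simps)

lemma apply_dk_cong:
  assumes V: "open V" and w: "w \<in> V" and eq: "\<And>z. z \<in> V \<Longrightarrow> u z = u' z"
  shows "apply_dk k t u w = apply_dk k t u' w"
proof -
  have "deriv u w = deriv u' w"
    by (rule deriv_cong_ev[OF eventually_mono[OF eventually_nhds_in_open[OF V w]] refl]) (use eq in auto)
  then show ?thesis using eq[OF w] by (cases t) simp
qed

lemma apply_dk_sum:
  assumes V: "open V" and w: "w \<in> V" and J: "finite J" and u: "\<And>j. j \<in> J \<Longrightarrow> u j holomorphic_on V"
  shows "apply_dk k t (\<lambda>w. \<Sum>j\<in>J. c j * u j w) w = (\<Sum>j\<in>J. c j * apply_dk k t (u j) w)"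
proof -
  have "deriv (\<lambda>w. \<Sum>j\<in>J. c j * u j w) w = (\<Sum>j\<in>J. c j * deriv (u j) w)"
    by (intro DERIV_imp_deriv DERIV_sum DERIV_cmult holomorphic_derivI[OF u V w])
  then show ?thesis
    by (cases t) (simp add: sum_distrib_left sum.distrib algebra_simps)
qed

lemma Xop_hv: "open V \<Longrightarrow> hv V f \<Longrightarrow> hv V (Xop n k X f)"
  unfolding hv_def Xop_def by (auto intro!: holomorphic_on_sum apply_dk_hol)

lemma Xop_pow_hv: "open V \<Longrightarrow> hv V f \<Longrightarrow> hv V ((Xop n k X ^^ m) f)"
  by (induction m) (auto intro: Xop_hv)

lemma expop_hv: "open V \<Longrightarrow> hv V f \<Longrightarrow> hv V (expop n k X f)"
  using Xop_pow_hv[of V f] unfolding hv_def expop_def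
  by (auto intro!: holomorphic_on_sum holomorphic_on_divide holomorphic_intros)

lemma Xop_zo: "zo n f \<Longrightarrow> zo n (Xop n k X f)"
  unfolding zo_def Xop_def
  by (auto intro!: ext sum.neutral simp: diff_not_multi lower_multi)

lemma Xop_pow_zo: "zo n f \<Longrightarrow> zo n ((Xop n k X ^^ m) f)"
  by (induction m) (auto intro: Xop_zo)

lemma expop_zo: "zo n f \<Longrightarrow> zo n (expop n k X f)"
  using Xop_pow_zo[of n f] unfolding zo_def expop_def
  by (auto intro!: ext sum.neutral)

lemma Xop_loc:
  assumes V: "open V" and eq: "\<forall>\<beta>\<in>down \<gamma>. \<forall>w\<in>V. f \<beta> w = f' \<beta> w"
  shows "\<forall>\<beta>\<in>down \<gamma>. \<forall>w\<in>V. Xop n k X f \<beta> w = Xop n k X f' \<beta> w"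
  using eq down_diff
  by (auto simp: Xop_apply intro!: sum.cong apply_dk_cong[OF V])

lemma Xop_pow_loc:
  assumes V: "open V" and eq: "\<forall>\<beta>\<in>down \<gamma>. \<forall>w\<in>V. f \<beta> w = f' \<beta> w"
  shows "\<forall>\<beta>\<in>down \<gamma>. \<forall>w\<in>V. (Xop n k X ^^ m) f \<beta> w = (Xop n k X ^^ m) f' \<beta> w"
proof (induction m)
  case 0
  then show ?case using eq by simp
next
  case (Suc m)
  then show ?case using Xop_loc[OF V Suc] by simp
qed

lemma expop_loc:
  assumes V: "open V" and eq: "\<forall>\<beta>\<in>down \<gamma>. \<forall>w\<in>V. f \<beta> w = f' \<beta> w" and w: "w \<in> V"
  shows "expop n k X f \<gamma> w = expop n k X f' \<gamma> w"
  using Xop_pow_loc[OF V eq] self_down w by (simp add: expop_apply)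

lemma expop_loc_all:
  assumes V: "open V" and eq: "\<And>\<beta> w. w \<in> V \<Longrightarrow> f \<beta> w = f' \<beta> w" and w: "w \<in> V"
  shows "expop n k X f \<gamma> w = expop n k X f' \<gamma> w"
  by (rule expop_loc[OF V _ w]) (use eq in auto)

lemma Xop_sum:
  assumes V: "open V" and J: "finite J" and F: "\<And>j. j \<in> J \<Longrightarrow> hv V (F j)" and w: "w \<in> V"
  shows "Xop n k X (\<lambda>\<beta> w. \<Sum>j\<in>J. c j * F j \<beta> w) \<beta> w = (\<Sum>j\<in>J. c j * Xop n k X (F j) \<beta> w)"
proof -
  have "Xop n k X (\<lambda>\<beta> w. \<Sum>j\<in>J. c j * F j \<beta> w) \<beta> w =
     (\<Sum>\<alpha>\<in>lower n \<beta> - {\<lambda>_. 0}. \<Sum>j\<in>J. c j * apply_dk k (X \<alpha>) (F j (mi_diff \<beta> \<alpha>)) w)"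
    unfolding Xop_apply
    by (intro sum.cong refl apply_dk_sum[OF V w J]) (use F in \<open>auto simp: hv_def\<close>)
  also have "\<dots> = (\<Sum>j\<in>J. c j * Xop n k X (F j) \<beta> w)"
    by (subst sum.swap) (simp add: Xop_apply sum_distrib_left)
  finally show ?thesis .
qed

lemma Xop_pow_sum:
  assumes V: "open V" and J: "finite J" and F: "\<And>j. j \<in> J \<Longrightarrow> hv V (F j)"
  shows "\<forall>\<beta>. \<forall>w\<in>V. (Xop n k X ^^ m) (\<lambda>\<beta> w. \<Sum>j\<in>J. c j * F j \<beta> w) \<beta> w = (\<Sum>j\<in>J. c j * (Xop n k X ^^ m) (F j) \<beta> w)"
proof (induction m)
  case 0
  then show ?case by simp
next
  case (Suc m)
  show ?case
  proof (intro allI ballI)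
    fix \<beta> w assume w: "w \<in> V"
    have "(Xop n k X ^^ Suc m) (\<lambda>\<beta> w. \<Sum>j\<in>J. c j * F j \<beta> w) \<beta> w
        = Xop n k X ((Xop n k X ^^ m) (\<lambda>\<beta> w. \<Sum>j\<in>J. c j * F j \<beta> w)) \<beta> w" by simp
    also have "\<dots> = Xop n k X (\<lambda>\<beta> w. \<Sum>j\<in>J. c j * (Xop n k X ^^ m) (F j) \<beta> w) \<beta> w"
    proof -
      have "\<forall>\<beta>'\<in>down \<beta>. \<forall>w\<in>V. (Xop n k X ^^ m) (\<lambda>\<beta> w. \<Sum>j\<in>J. c j * F j \<beta> w) \<beta>' w
          = (\<lambda>\<beta> w. \<Sum>j\<in>J. c j * (Xop n k X ^^ m) (F j) \<beta> w) \<beta>' w"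
        using Suc by simp
      from Xop_loc[OF V this] w self_down show ?thesis by blast
    qed
    also have "\<dots> = (\<Sum>j\<in>J. c j * Xop n k X ((Xop n k X ^^ m) (F j)) \<beta> w)"
      by (rule Xop_sum[OF V J _ w]) (use F Xop_pow_hv[OF V] in auto)
    finally show "(Xop n k X ^^ Suc m) (\<lambda>\<beta> w. \<Sum>j\<in>J. c j * F j \<beta> w) \<beta> w = (\<Sum>j\<in>J. c j * (Xop n k X ^^ Suc m) (F j) \<beta> w)"
      by simp
  qed
qed

lemma expop_sum:
  assumes V: "open V" and J: "finite J" and F: "\<And>j. j \<in> J \<Longrightarrow> hv V (F j)" and w: "w \<in> V"
  shows "expop n k X (\<lambda>\<beta> w. \<Sum>j\<in>J. c j * F j \<beta> w) \<beta> w = (\<Sum>j\<in>J. c j * expop n k X (F j) \<beta> w)"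
proof -
  have "expop n k X (\<lambda>\<beta> w. \<Sum>j\<in>J. c j * F j \<beta> w) \<beta> w
      = (\<Sum>m\<le>mdeg n \<beta>. (\<Sum>j\<in>J. c j * (Xop n k X ^^ m) (F j) \<beta> w) / of_nat (fact m))"
    unfolding expop_apply using Xop_pow_sum[OF V J F] w by simp
  also have "\<dots> = (\<Sum>m\<le>mdeg n \<beta>. \<Sum>j\<in>J. c j * ((Xop n k X ^^ m) (F j) \<beta> w / of_nat (fact m)))"
    by (simp add: sum_divide_distrib)
  also have "\<dots> = (\<Sum>j\<in>J. \<Sum>m\<le>mdeg n \<beta>. c j * ((Xop n k X ^^ m) (F j) \<beta> w / of_nat (fact m)))"
    by (rule sum.swap)
  also have "\<dots> = (\<Sum>j\<in>J. c j * expop n k X (F j) \<beta> w)"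
    by (simp add: expop_apply sum_distrib_left)
  finally show ?thesis .
qed

lemma Xop_scal:
  assumes V: "open V" and F: "hv V f" and w: "w \<in> V"
  shows "Xop n k X (\<lambda>\<beta> w. a * f \<beta> w) \<beta> w = a * Xop n k X f \<beta> w"
  using Xop_sum[OF V _ _ w, of "{0::nat}" "\<lambda>_. f" n k X "\<lambda>_. a" \<beta>] F by simp

lemma Xop_neg: "Xop n k (\<lambda>\<alpha>. - X \<alpha>) f \<beta> w = - Xop n k X f \<beta> w"
  by (simp add: Xop_apply apply_dk_neg sum_negf)

lemma Xop_pow_neg:
  assumes V: "open V" and F: "hv V f"
  shows "\<forall>\<beta>. \<forall>w\<in>V. (Xop n k (\<lambda>\<alpha>. - X \<alpha>) ^^ m) f \<beta> w = (-1)^m * (Xop n k X ^^ m) f \<beta> w"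
proof (induction m)
  case 0
  then show ?case by simp
next
  case (Suc m)
  show ?case
  proof (intro allI ballI)
    fix \<beta> w assume w: "w \<in> V"
    have "(Xop n k (\<lambda>\<alpha>. - X \<alpha>) ^^ Suc m) f \<beta> w = - Xop n k X ((Xop n k (\<lambda>\<alpha>. - X \<alpha>) ^^ m) f) \<beta> w"
      by (simp add: Xop_neg)
    also have "\<dots> = - Xop n k X (\<lambda>\<beta> w. (-1)^m * (Xop n k X ^^ m) f \<beta> w) \<beta> w"
    proof -
      have "\<forall>\<beta>'\<in>down \<beta>. \<forall>w\<in>V. (Xop n k (\<lambda>\<alpha>. - X \<alpha>) ^^ m) f \<beta>' w = (\<lambda>\<beta> w. (-1)^m * (Xop n k X ^^ m) f \<beta> w) \<beta>' w"
        using Suc by simp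
      from Xop_loc[OF V this] w self_down show ?thesis by (metis (no_types, lifting) neg_equal_iff_equal)
    qed
    also have "\<dots> = - ((-1)^m * Xop n k X ((Xop n k X ^^ m) f) \<beta> w)"
      by (subst Xop_scal[OF V Xop_pow_hv[OF V F] w]) simp
    finally show "(Xop n k (\<lambda>\<alpha>. - X \<alpha>) ^^ Suc m) f \<beta> w = (-1) ^ Suc m * (Xop n k X ^^ Suc m) f \<beta> w"
      by simp
  qed
qed

lemma Xop_pow_nil: "mdeg n \<delta> < m \<Longrightarrow> (Xop n k X ^^ m) f \<delta> = (\<lambda>_. 0)"
proof (induction m arbitrary: \<delta>)
  case 0
  then show ?case by simp
next
  case (Suc m)
  have *: "(Xop n k X ^^ m) f (mi_diff \<delta> \<alpha>) = (\<lambda>_. 0)" if "\<alpha> \<in> lower n \<delta> - {\<lambda>_. 0}" for \<alpha>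
    using mdeg_less[OF that] Suc.prems by (intro Suc.IH) simp
  have "Xop n k X ((Xop n k X ^^ m) f) \<delta> w = 0" for w
    by (subst Xop_apply, rule sum.neutral) (use * in auto)
  then show ?case by (simp add: fun_eq_iff)
qed

lemma alt_inner:
  assumes "s > 0"
  shows "(\<Sum>j\<le>s. (-1)^j / (fact j * fact (s - j)) :: complex) = 0"
proof -
  have "(\<Sum>j\<le>s. (-1)^j / (fact j * fact (s - j)) :: complex) = (\<Sum>j\<le>s. (-1)^j * of_nat (s choose j)) / fact s"
    by (simp add: sum_divide_distrib binomial_fact)
  also have "\<dots> = 0" using choose_alternating_sum[OF assms] by simp
  finally show ?thesis .
qed

lemma alt_sum:
  fixes a :: "nat \<Rightarrow> complex"
  assumes a: "\<And>s. s > N \<Longrightarrow> a s = 0"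
  shows "(\<Sum>m\<le>N. (\<Sum>j\<le>N. (-1)^j / fact j * a (m + j)) / fact m) = a 0"
proof -
  define g where "g = (\<lambda>j m. (-1)^j / (fact j * fact m) * a (j + m) :: complex)"
  have "(\<Sum>m\<le>N. (\<Sum>j\<le>N. (-1)^j / fact j * a (m + j)) / fact m) = (\<Sum>m\<le>N. \<Sum>j\<le>N. g j m)"
    by (simp add: g_def sum_divide_distrib add.commute)
  also have "\<dots> = (\<Sum>j\<le>N. \<Sum>m\<le>N. g j m)" by (rule sum.swap)
  also have "\<dots> = (\<Sum>(j,m)\<in>{..N} \<times> {..N}. g j m)" by (simp add: sum.cartesian_product)
  also have "\<dots> = (\<Sum>(j,m)\<in>{(j,m). j + m \<le> N}. g j m)"
  proof (rule sum.mono_neutral_right)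
    have z: "g j m = 0" if "\<not> j + m \<le> N" for j m using a[of "j+m"] that by (simp add: g_def)
    show "\<forall>i\<in>{..N} \<times> {..N} - {(j, m). j + m \<le> N}. (case i of (j, m) \<Rightarrow> g j m) = 0"
      using z by auto
  qed auto
  also have "\<dots> = (\<Sum>s\<le>N. \<Sum>j\<le>s. g j (s - j))" by (rule sum.triangle_reindex_eq)
  also have "\<dots> = (\<Sum>s\<le>N. a s * (\<Sum>j\<le>s. (-1)^j / (fact j * fact (s - j))))"
    by (intro sum.cong refl) (auto simp: g_def sum_distrib_left intro!: sum.cong)
  also have "\<dots> = (\<Sum>s\<le>N. if s = 0 then a 0 else 0)"
    by (intro sum.cong refl) (auto simp: alt_inner)
  also have "\<dots> = a 0" by (simp add: sum.delta)
  finally show ?thesis .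
qed

lemma exp_inv:
  assumes V: "open V" and F: "hv V f" and w: "w \<in> V"
  shows "expop n k X (expop n k (\<lambda>\<alpha>. - X \<alpha>) f) \<gamma> w = f \<gamma> w"
proof -
  define N where "N = mdeg n \<gamma>"
  define E' where "E' = (\<lambda>\<beta> w. \<Sum>j\<le>N. ((-1)^j / fact j) * (Xop n k X ^^ j) f \<beta> w)"
  have 1: "\<forall>\<beta>\<in>down \<gamma>. \<forall>w\<in>V. expop n k (\<lambda>\<alpha>. - X \<alpha>) f \<beta> w = E' \<beta> w"
  proof (intro ballI)
    fix \<beta> w assume b: "\<beta> \<in> down \<gamma>" and w: "w \<in> V"
    have "expop n k (\<lambda>\<alpha>. - X \<alpha>) f \<beta> w = (\<Sum>j\<le>mdeg n \<beta>. ((-1)^j / fact j) * (Xop n k X ^^ j) f \<beta> w)"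
      unfolding expop_apply using Xop_pow_neg[OF V F] w by simp
    also have "\<dots> = E' \<beta> w" unfolding E'_def
      by (rule sum.mono_neutral_left) (use mdeg_down[OF b] Xop_pow_nil in \<open>auto simp: N_def\<close>)
    finally show "expop n k (\<lambda>\<alpha>. - X \<alpha>) f \<beta> w = E' \<beta> w" .
  qed
  have "expop n k X (expop n k (\<lambda>\<alpha>. - X \<alpha>) f) \<gamma> w = expop n k X E' \<gamma> w"
    by (rule expop_loc[OF V 1 w])
  also have "\<dots> = (\<Sum>m\<le>N. (Xop n k X ^^ m) E' \<gamma> w / fact m)"
    by (simp add: expop_apply N_def)
  also have "\<dots> = (\<Sum>m\<le>N. (\<Sum>j\<le>N. ((-1)^j / fact j) * (Xop n k X ^^ m) ((Xop n k X ^^ j) f) \<gamma> w) / fact m)"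
  proof (intro sum.cong refl arg_cong2[where f="(/)"])
    fix m
    have S: "\<forall>\<beta>. \<forall>w\<in>V. (Xop n k X ^^ m) (\<lambda>\<beta> w. \<Sum>j\<le>N. ((-1)^j / fact j) * (Xop n k X ^^ j) f \<beta> w) \<beta> w
        = (\<Sum>j\<le>N. ((-1)^j / fact j) * (Xop n k X ^^ m) ((Xop n k X ^^ j) f) \<beta> w)"
      by (rule Xop_pow_sum[OF V finite_atMost]) (rule Xop_pow_hv[OF V F])
    show "(Xop n k X ^^ m) E' \<gamma> w = (\<Sum>j\<le>N. ((-1)^j / fact j) * (Xop n k X ^^ m) ((Xop n k X ^^ j) f) \<gamma> w)"
      unfolding E'_def using S w by blast
  qed
  also have "\<dots> = (\<Sum>m\<le>N. (\<Sum>j\<le>N. ((-1)^j / fact j) * (Xop n k X ^^ (m + j)) f \<gamma> w) / fact m)"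
    by (simp add: funpow_add)
  also have "\<dots> = (Xop n k X ^^ 0) f \<gamma> w"
    by (rule alt_sum) (simp add: Xop_pow_nil N_def)
  finally show ?thesis by simp
qed

lemma lower_swap:
  "(\<alpha> \<in> lower n \<gamma> \<and> \<delta> \<in> lower n (mi_diff \<gamma> \<alpha>)) \<longleftrightarrow> (\<delta> \<in> lower n \<gamma> \<and> \<alpha> \<in> lower n (mi_diff \<gamma> \<delta>))"
proof -
  have e: "(\<alpha> i \<le> \<gamma> i \<and> \<delta> i \<le> \<gamma> i - \<alpha> i) \<longleftrightarrow> (\<delta> i \<le> \<gamma> i \<and> \<alpha> i \<le> \<gamma> i - \<delta> i)" for i
    by arith
  have "((\<forall>i. \<alpha> i \<le> \<gamma> i) \<and> (\<forall>i. \<delta> i \<le> \<gamma> i - \<alpha> i)) \<longleftrightarrow> ((\<forall>i. \<delta> i \<le> \<gamma> i) \<and> (\<forall>i. \<alpha> i \<le> \<gamma> i - \<delta> i))"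
    using e by blast
  then show ?thesis unfolding lower_def mi_diff_def by auto
qed

lemma lower_sw1: "x \<in> lower n \<gamma> \<Longrightarrow> y \<in> lower n (mi_diff \<gamma> x) \<Longrightarrow> y \<in> lower n \<gamma>"
  using lower_swap by blast

lemma lower_sw2: "x \<in> lower n \<gamma> \<Longrightarrow> y \<in> lower n (mi_diff \<gamma> x) \<Longrightarrow> x \<in> lower n (mi_diff \<gamma> y)"
  using lower_swap by blast

lemma mi_diff_comm: "mi_diff (mi_diff \<gamma> \<alpha>) \<delta> = mi_diff (mi_diff \<gamma> \<delta>) \<alpha>"
  by (simp add: mi_diff_def diff_diff_left add.commute)

lemma Xop_ps:
  assumes V: "open V" and F: "hv V f" and w: "w \<in> V"
  shows "Xop n k X (ps_scale n s f) \<gamma> w = ps_scale n s (Xop n k X f) \<gamma> w"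
proof -
  define h where "h = (\<lambda>\<alpha> \<delta>. s \<delta> * apply_dk k (X \<alpha>) (f (mi_diff (mi_diff \<gamma> \<alpha>) \<delta>)) w)"
  have "Xop n k X (ps_scale n s f) \<gamma> w = (\<Sum>\<alpha>\<in>lower n \<gamma> - {\<lambda>_. 0}. \<Sum>\<delta>\<in>lower n (mi_diff \<gamma> \<alpha>). h \<alpha> \<delta>)"
    unfolding Xop_apply ps_scale_def h_def
    by (intro sum.cong refl apply_dk_sum[OF V w finite_lower]) (use F in \<open>auto simp: hv_def\<close>)
  also have "\<dots> = (\<Sum>(\<alpha>,\<delta>)\<in>Sigma (lower n \<gamma> - {\<lambda>_. 0}) (\<lambda>\<alpha>. lower n (mi_diff \<gamma> \<alpha>)). h \<alpha> \<delta>)"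
    by (rule sum.Sigma) (auto simp: finite_lower)
  also have "\<dots> = (\<Sum>(\<delta>,\<alpha>)\<in>Sigma (lower n \<gamma>) (\<lambda>\<delta>. lower n (mi_diff \<gamma> \<delta>) - {\<lambda>_. 0}). h \<alpha> \<delta>)"
    by (rule sum.reindex_bij_witness[where i="\<lambda>(\<delta>,\<alpha>). (\<alpha>,\<delta>)" and j="\<lambda>(\<alpha>,\<delta>). (\<delta>,\<alpha>)"])
       (auto, (meson lower_sw1 lower_sw2)+)
  also have "\<dots> = (\<Sum>\<delta>\<in>lower n \<gamma>. \<Sum>\<alpha>\<in>lower n (mi_diff \<gamma> \<delta>) - {\<lambda>_. 0}. h \<alpha> \<delta>)"
    by (rule sum.Sigma[symmetric]) (auto simp: finite_lower)
  also have "\<dots> = ps_scale n s (Xop n k X f) \<gamma> w"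
    unfolding ps_scale_def Xop_apply h_def
    by (simp add: sum_distrib_left mi_diff_comm)
  finally show ?thesis .
qed

lemma Xop_pow_ps:
  assumes V: "open V" and F: "hv V f"
  shows "\<forall>\<gamma>. \<forall>w\<in>V. (Xop n k X ^^ m) (ps_scale n s f) \<gamma> w = ps_scale n s ((Xop n k X ^^ m) f) \<gamma> w"
proof (induction m)
  case 0
  then show ?case by simp
next
  case (Suc m)
  show ?case
  proof (intro allI ballI)
    fix \<gamma> w assume w: "w \<in> V"
    have "(Xop n k X ^^ Suc m) (ps_scale n s f) \<gamma> w = Xop n k X ((Xop n k X ^^ m) (ps_scale n s f)) \<gamma> w" by simp
    also have "\<dots> = Xop n k X (ps_scale n s ((Xop n k X ^^ m) f)) \<gamma> w"
    proof -
      have "\<forall>\<beta>'\<in>down \<gamma>. \<forall>w\<in>V. (Xop n k X ^^ m) (ps_scale n s f) \<beta>' w = ps_scale n s ((Xop n k X ^^ m) f) \<beta>' w"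
        using Suc by simp
      from Xop_loc[OF V this] w self_down show ?thesis by blast
    qed
    also have "\<dots> = ps_scale n s (Xop n k X ((Xop n k X ^^ m) f)) \<gamma> w"
      by (rule Xop_ps[OF V Xop_pow_hv[OF V F] w])
    finally show "(Xop n k X ^^ Suc m) (ps_scale n s f) \<gamma> w = ps_scale n s ((Xop n k X ^^ Suc m) f) \<gamma> w"
      by simp
  qed
qed

lemma expop_ps:
  assumes V: "open V" and F: "hv V f" and w: "w \<in> V"
  shows "expop n k X (ps_scale n s f) \<gamma> w = ps_scale n s (expop n k X f) \<gamma> w"
proof -
  have "expop n k X (ps_scale n s f) \<gamma> w
     = (\<Sum>m\<le>mdeg n \<gamma>. (\<Sum>\<delta>\<in>lower n \<gamma>. s \<delta> * (Xop n k X ^^ m) f (mi_diff \<gamma> \<delta>) w) / fact m)"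
    unfolding expop_apply using Xop_pow_ps[OF V F] w by (simp add: ps_scale_def)
  also have "\<dots> = (\<Sum>m\<le>mdeg n \<gamma>. \<Sum>\<delta>\<in>lower n \<gamma>. s \<delta> * ((Xop n k X ^^ m) f (mi_diff \<gamma> \<delta>) w / fact m))"
    by (simp add: sum_divide_distrib)
  also have "\<dots> = (\<Sum>\<delta>\<in>lower n \<gamma>. \<Sum>m\<le>mdeg n \<gamma>. s \<delta> * ((Xop n k X ^^ m) f (mi_diff \<gamma> \<delta>) w / fact m))"
    by (rule sum.swap)
  also have "\<dots> = (\<Sum>\<delta>\<in>lower n \<gamma>. s \<delta> * (\<Sum>m\<le>mdeg n \<gamma>. (Xop n k X ^^ m) f (mi_diff \<gamma> \<delta>) w / fact m))"
    by (simp add: sum_distrib_left)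
  also have "\<dots> = (\<Sum>\<delta>\<in>lower n \<gamma>. s \<delta> * (\<Sum>m\<le>mdeg n (mi_diff \<gamma> \<delta>). (Xop n k X ^^ m) f (mi_diff \<gamma> \<delta>) w / fact m))"
  proof (rule sum.cong[OF refl], rule arg_cong2[where f="(*)"], rule refl)
    fix \<delta>
    show "(\<Sum>m\<le>mdeg n \<gamma>. (Xop n k X ^^ m) f (mi_diff \<gamma> \<delta>) w / fact m) =
          (\<Sum>m\<le>mdeg n (mi_diff \<gamma> \<delta>). (Xop n k X ^^ m) f (mi_diff \<gamma> \<delta>) w / fact m)"
      by (rule sum.mono_neutral_right) (use mdeg_diff_le Xop_pow_nil in auto)
  qed
  also have "\<dots> = ps_scale n s (expop n k X f) \<gamma> w"
    by (simp add: ps_scale_def expop_apply)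
  finally show ?thesis .
qed

lemma expop_add:
  assumes V: "open V" and F: "hv V f" and F': "hv V f'" and w: "w \<in> V"
  shows "expop n k X (ser_add f f') \<gamma> w = expop n k X f \<gamma> w + expop n k X f' \<gamma> w"
proof -
  have "expop n k X (\<lambda>\<beta> w. \<Sum>j\<in>{True, False}. 1 * (if j then f else f') \<beta> w) \<gamma> w
      = (\<Sum>j\<in>{True, False}. 1 * expop n k X (if j then f else f') \<gamma> w)"
    by (rule expop_sum[OF V _ _ w]) (use F F' in auto)
  moreover have "(\<lambda>\<beta> w. \<Sum>j\<in>{True, False}. 1 * (if j then f else f') \<beta> w) = ser_add f f'"
    by (simp add: ser_add_def)
  ultimately show ?thesis by simp
qed

lemma powi_cancel: "(x::complex) \<noteq> 0 \<Longrightarrow> x powi k * (x powi (-k) * y) = y"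
  by (simp add: power_int_minus power_int_not_zero)

lemma powi_cancel2: "(x::complex) \<noteq> 0 \<Longrightarrow> x powi (-k) * (x powi k * y) = y"
  by (simp add: power_int_minus power_int_not_zero)

lemma slash_unfold:
  assumes g: "g \<in> SL2R" and t: "\<tau> \<in> upper_half"
  shows "slash k g (expop n k X) (\<lambda>\<beta> w. jfac g w powi (-k) * u \<beta> (moeb g w)) \<beta> \<tau>
       = jfac g \<tau> powi (-k) * expop n k X u \<beta> (moeb g \<tau>)"
proof -
  have eq: "jfac g (moeb (sl_inv g) w) powi k * (jfac g (moeb (sl_inv g) w) powi (-k) * u \<beta>' (moeb g (moeb (sl_inv g) w))) = u \<beta>' w"
    if w: "w \<in> upper_half" for \<beta>' w
  proof -
    have "jfac g (moeb (sl_inv g) w) \<noteq> 0" using jfac_nz[OF g moeb_H[OF sl_inv_SL[OF g] w]] .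
    then show ?thesis using moeb_inv'[OF g w] by (simp add: powi_cancel)
  qed
  have "expop n k X (\<lambda>\<beta>' w. jfac g (moeb (sl_inv g) w) powi k * (jfac g (moeb (sl_inv g) w) powi (-k) * u \<beta>' (moeb g (moeb (sl_inv g) w)))) \<beta> (moeb g \<tau>)
      = expop n k X u \<beta> (moeb g \<tau>)"
    by (rule expop_loc_all[OF open_H _ moeb_H[OF g t]]) (use eq in auto)
  then show ?thesis by (simp add: slash_def)
qed

lemma comp_hol:
  assumes h: "h \<in> SL2R" and VH: "V \<subseteq> upper_half" and inv: "moeb h ` V \<subseteq> V"
    and u: "u holomorphic_on V" and m: "m holomorphic_on upper_half"
  shows "(\<lambda>w. m w * u (moeb h w)) holomorphic_on V"
proof -
  have "moeb h holomorphic_on V" using moeb_hol[OF h] VH by (rule holomorphic_on_subset)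
  from holomorphic_on_compose_gen[OF this u inv]
  have "(\<lambda>w. u (moeb h w)) holomorphic_on V" by (simp add: o_def)
  moreover have "m holomorphic_on V" using m VH by (rule holomorphic_on_subset)
  ultimately show ?thesis by (auto intro!: holomorphic_intros)
qed

lemma sec_hv: "f \<in> sections n k G L V \<Longrightarrow> hv V f"
proof -
  assume "f \<in> sections n k G L V"
  then have h: "hol_ser n V f" by (simp add: sections_def)
  show ?thesis unfolding hv_def
  proof
    fix \<beta>
    show "f \<beta> holomorphic_on V"
    proof (cases "\<beta> \<in> multi n")
      case True
      then show ?thesis using h by (simp add: hol_ser_def)
    next
      case False
      then have "f \<beta> = (\<lambda>_. 0)" using h by (simp add: hol_ser_def)
      then show ?thesis by simp
    qed
  qed
qed

lemma sec_zo: "f \<in> sections n k G L V \<Longrightarrow> zo n f"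
  unfolding sections_def hol_ser_def zo_def by simp

lemma sec_out: "f \<in> sections n k G L V \<Longrightarrow> \<tau> \<notin> V \<Longrightarrow> f \<beta> \<tau> = 0"
  unfolding sections_def by blast

lemma sec_eq: "f \<in> sections n k G L V \<Longrightarrow> g \<in> G \<Longrightarrow> \<beta> \<in> multi n \<Longrightarrow> \<tau> \<in> V \<Longrightarrow>
    jfac g \<tau> powi (-k) * f \<beta> (moeb g \<tau>) = expop n k (L g) f \<beta> \<tau>"
  unfolding sections_def by blast

lemma sections_intro:
  assumes V: "open V" and hF: "hv V F" and zF: "zo n F" and inv: "\<forall>g\<in>G. moeb g ` V \<subseteq> V"
    and eq: "\<And>g \<beta> \<tau>. g \<in> G \<Longrightarrow> \<beta> \<in> multi n \<Longrightarrow> \<tau> \<in> V \<Longrightarrow>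
         jfac g \<tau> powi (-k) * F \<beta> (moeb g \<tau>) = expop n k (L g) F \<beta> \<tau>"
  shows "res V F \<in> sections n k G L V"
  unfolding sections_def hol_ser_def
proof (intro CollectI conjI ballI allI impI)
  fix \<beta> assume "\<beta> \<in> multi n"
  show "res V F \<beta> holomorphic_on V"
    by (rule holomorphic_transform[of "F \<beta>"]) (use hF in \<open>auto simp: hv_def res_def\<close>)
next
  fix \<beta> assume "\<beta> \<notin> multi n"
  then show "res V F \<beta> = (\<lambda>_. 0)" using zF by (auto simp: zo_def res_def)
next
  fix \<beta> \<tau> assume "\<tau> \<notin> V"
  then show "res V F \<beta> \<tau> = 0" by (simp add: res_def)
next
  fix g \<beta> \<tau> assume g: "g \<in> G" and b: "\<beta> \<in> multi n" and t: "\<tau> \<in> V"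
  have "moeb g \<tau> \<in> V" using inv g t by blast
  then have "res V F \<beta> (moeb g \<tau>) = F \<beta> (moeb g \<tau>)" by (simp add: res_def)
  moreover have "expop n k (L g) (res V F) \<beta> \<tau> = expop n k (L g) F \<beta> \<tau>"
    by (rule expop_loc_all[OF V _ t]) (simp add: res_def)
  ultimately show "jfac g \<tau> powi - k * res V F \<beta> (moeb g \<tau>) = expop n k (L g) (res V F) \<beta> \<tau>"
    using eq[OF g b t] by simp
qed

lemma neg_neg: "(\<lambda>\<alpha>. - (- (Y::mi \<Rightarrow> complex \<times> complex \<times> complex) \<alpha>)) = Y"
  by simp

lemma exp_inv': "open V \<Longrightarrow> hv V f \<Longrightarrow> w \<in> V \<Longrightarrow>
    expop n k (\<lambda>\<alpha>. - Y \<alpha>) (expop n k Y f) \<gamma> w = f \<gamma> w"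
  using exp_inv[of V f w n k "\<lambda>\<alpha>. - Y \<alpha>" \<gamma>] by simp

lemma fwd:
  assumes V: "open V" "V \<subseteq> upper_half" and inv: "moeb g ` V \<subseteq> V" and g: "g \<in> SL2R"
    and oe: "op_eq n (expop n k (LB g)) (slash k g (expop n k Y) \<circ> expop n k (LA g) \<circ> expop n k (\<lambda>\<alpha>. - Y \<alpha>))"
    and hf: "hv V f"
    and sec: "\<And>\<beta> \<tau>. \<beta> \<in> multi n \<Longrightarrow> \<tau> \<in> V \<Longrightarrow> jfac g \<tau> powi (-k) * f \<beta> (moeb g \<tau>) = expop n k (LA g) f \<beta> \<tau>"
    and b: "\<beta> \<in> multi n" and t: "\<tau> \<in> V"
  shows "jfac g \<tau> powi (-k) * expop n k Y f \<beta> (moeb g \<tau>) = expop n k (LB g) (expop n k Y f) \<beta> \<tau>"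
proof -
  obtain r where r: "r > 0" "ball \<tau> r \<subseteq> V" using V(1) t open_contains_ball by blast
  have tH: "\<tau> \<in> upper_half" using V t by blast
  have hEYf: "hv V (expop n k Y f)" by (rule expop_hv[OF V(1) hf])
  have LQ: "LOC n (slash k g (expop n k Y) \<circ> expop n k (LA g) \<circ> expop n k (\<lambda>\<alpha>. - Y \<alpha>))"
    by (intro LOC_comp slash_LOC g expop_LOC)
  have "expop n k (LB g) (expop n k Y f) \<beta> \<tau>
      = (slash k g (expop n k Y) \<circ> expop n k (LA g) \<circ> expop n k (\<lambda>\<alpha>. - Y \<alpha>)) (expop n k Y f) \<beta> \<tau>"
    by (rule transfer[OF oe expop_LOC LQ b tH r(1)]) (use hEYf r(2) in \<open>auto simp: hv_def intro: holomorphic_on_subset\<close>)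
  also have "\<dots> = slash k g (expop n k Y) (expop n k (LA g) (expop n k (\<lambda>\<alpha>. - Y \<alpha>) (expop n k Y f))) \<beta> \<tau>"
    by simp
  also have "\<dots> = slash k g (expop n k Y) (expop n k (LA g) f) \<beta> \<tau>"
  proof (rule LOC_val[OF slash_LOC[OF g expop_LOC] b tH r(1)], rule agrr_eq, intro conjI ballI)
    fix \<beta>' w assume w: "w \<in> ball \<tau> r"
    show "expop n k (LA g) (expop n k (\<lambda>\<alpha>. - Y \<alpha>) (expop n k Y f)) \<beta>' w = expop n k (LA g) f \<beta>' w"
      by (rule expop_loc_all[OF V(1) _]) (use exp_inv'[OF V(1) hf] w r(2) in auto)
  next
    fix \<beta>'
    show "expop n k (LA g) (expop n k (\<lambda>\<alpha>. - Y \<alpha>) (expop n k Y f)) \<beta>' holomorphic_on ball \<tau> r"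
    proof -
      have "hv V (expop n k (LA g) (expop n k (\<lambda>\<alpha>. - Y \<alpha>) (expop n k Y f)))"
        by (intro expop_hv V(1) hEYf)
      then show ?thesis using r(2) by (auto simp: hv_def intro: holomorphic_on_subset)
    qed
    show "expop n k (LA g) f \<beta>' holomorphic_on ball \<tau> r"
      using expop_hv[OF V(1) hf, of n k "LA g"] r(2) by (auto simp: hv_def intro: holomorphic_on_subset)
  qed
  also have "\<dots> = slash k g (expop n k Y) (\<lambda>\<beta> w. jfac g w powi (-k) * f \<beta> (moeb g w)) \<beta> \<tau>"
  proof (rule LOC_val[OF slash_LOC[OF g expop_LOC] b tH r(1)], rule agrr_eq, intro conjI ballI)
    fix \<beta>' w assume b': "\<beta>' \<in> lower n \<beta>" and w: "w \<in> ball \<tau> r"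
    show "expop n k (LA g) f \<beta>' w = jfac g w powi (-k) * f \<beta>' (moeb g w)"
      using sec[of \<beta>' w] lower_multi[OF b'] w r(2) by auto
  next
    fix \<beta>'
    show "expop n k (LA g) f \<beta>' holomorphic_on ball \<tau> r"
      using expop_hv[OF V(1) hf, of n k "LA g"] r(2) by (auto simp: hv_def intro: holomorphic_on_subset)
    have "(\<lambda>w. jfac g w powi (-k) * f \<beta>' (moeb g w)) holomorphic_on V"
      by (rule comp_hol[OF g V(2) inv _ jfac_powi_hol[OF g]]) (use hf in \<open>simp add: hv_def\<close>)
    then show "(\<lambda>w. jfac g w powi (-k) * f \<beta>' (moeb g w)) holomorphic_on ball \<tau> r"
      using r(2) by (rule holomorphic_on_subset)
  qed
  also have "\<dots> = jfac g \<tau> powi (-k) * expop n k Y f \<beta> (moeb g \<tau>)"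
    by (rule slash_unfold[OF g tH])
  finally show ?thesis by simp
qed

lemma slash_inv:
  assumes V: "open V" "V \<subseteq> upper_half" and inv: "moeb g ` V \<subseteq> V" and inv': "moeb (sl_inv g) ` V \<subseteq> V"
    and g: "g \<in> SL2R" and hW: "hv V W" and t: "\<tau> \<in> V"
  shows "slash k g (expop n k (\<lambda>\<alpha>. - Y \<alpha>)) (slash k g (expop n k Y) W) \<beta> \<tau> = W \<beta> \<tau>"
proof -
  define gi where "gi = sl_inv g"
  have gi: "gi \<in> SL2R" using sl_inv_SL[OF g] by (simp add: gi_def)
  define Wt where "Wt = (\<lambda>\<beta>' w. jfac g (moeb gi w) powi k * W \<beta>' (moeb gi w))"
  have tH: "\<tau> \<in> upper_half" using V t by blast
  define \<sigma> where "\<sigma> = moeb g \<tau>"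
  have sV: "\<sigma> \<in> V" using inv t by (auto simp: \<sigma>_def)
  have sH: "\<sigma> \<in> upper_half" using sV V by blast
  have Z: "jfac g (moeb gi w) powi k * slash k g (expop n k Y) W \<beta>' (moeb gi w) = expop n k Y Wt \<beta>' w"
    if w: "w \<in> upper_half" for \<beta>' w
  proof -
    have nz: "jfac g (moeb gi w) \<noteq> 0" using jfac_nz[OF g moeb_H[OF gi w]] .
    have "slash k g (expop n k Y) W \<beta>' (moeb gi w) = jfac g (moeb gi w) powi (-k) * expop n k Y Wt \<beta>' (moeb g (moeb gi w))"
      by (simp add: slash_def Wt_def gi_def)
    also have "moeb g (moeb gi w) = w" using moeb_inv'[OF g w] by (simp add: gi_def)
    finally show ?thesis using nz by (simp add: powi_cancel)
  qed
  have hWt: "hv V Wt"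
    unfolding hv_def Wt_def
  proof
    fix \<beta>'
    show "(\<lambda>w. jfac g (moeb gi w) powi k * W \<beta>' (moeb gi w)) holomorphic_on V"
      by (rule comp_hol[OF gi V(2)]) (use inv' hW jfac_comp_hol[OF g gi] in \<open>auto simp: gi_def hv_def\<close>)
  qed
  have "slash k g (expop n k (\<lambda>\<alpha>. - Y \<alpha>)) (slash k g (expop n k Y) W) \<beta> \<tau>
      = jfac g \<tau> powi (-k) * expop n k (\<lambda>\<alpha>. - Y \<alpha>)
          (\<lambda>\<beta>' w. jfac g (moeb gi w) powi k * slash k g (expop n k Y) W \<beta>' (moeb gi w)) \<beta> \<sigma>"
    by (simp add: slash_def[of k g "expop n k (\<lambda>\<alpha>. - Y \<alpha>)"] gi_def \<sigma>_def)
  also have "expop n k (\<lambda>\<alpha>. - Y \<alpha>) (\<lambda>\<beta>' w. jfac g (moeb gi w) powi k * slash k g (expop n k Y) W \<beta>' (moeb gi w)) \<beta> \<sigma>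
      = expop n k (\<lambda>\<alpha>. - Y \<alpha>) (expop n k Y Wt) \<beta> \<sigma>"
    by (rule expop_loc_all[OF open_H _ sH]) (use Z in auto)
  also have "\<dots> = Wt \<beta> \<sigma>" by (rule exp_inv'[OF V(1) hWt sV])
  also have "Wt \<beta> \<sigma> = jfac g \<tau> powi k * W \<beta> \<tau>"
    using moeb_inv[OF g tH] by (simp add: Wt_def \<sigma>_def gi_def)
  finally show ?thesis using jfac_nz[OF g tH] by (simp add: powi_cancel2)
qed

lemma bwd:
  assumes V: "open V" "V \<subseteq> upper_half" and inv: "moeb g ` V \<subseteq> V" and inv': "moeb (sl_inv g) ` V \<subseteq> V"
    and g: "g \<in> SL2R"
    and oe: "op_eq n (expop n k (LB g)) (slash k g (expop n k Y) \<circ> expop n k (LA g) \<circ> expop n k (\<lambda>\<alpha>. - Y \<alpha>))"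
    and hh: "hv V h"
    and sec: "\<And>\<beta> \<tau>. \<beta> \<in> multi n \<Longrightarrow> \<tau> \<in> V \<Longrightarrow> jfac g \<tau> powi (-k) * h \<beta> (moeb g \<tau>) = expop n k (LB g) h \<beta> \<tau>"
    and b: "\<beta> \<in> multi n" and t: "\<tau> \<in> V"
  shows "jfac g \<tau> powi (-k) * expop n k (\<lambda>\<alpha>. - Y \<alpha>) h \<beta> (moeb g \<tau>) = expop n k (LA g) (expop n k (\<lambda>\<alpha>. - Y \<alpha>) h) \<beta> \<tau>"
proof -
  define Q where "Q = slash k g (expop n k Y) \<circ> expop n k (LA g) \<circ> expop n k (\<lambda>\<alpha>. - Y \<alpha>)"
  define W where "W = expop n k (LA g) (expop n k (\<lambda>\<alpha>. - Y \<alpha>) h)"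
  have hW: "hv V W" unfolding W_def by (intro expop_hv V(1) hh)
  obtain r where r: "r > 0" "ball \<tau> r \<subseteq> V" using V(1) t open_contains_ball by blast
  have tH: "\<tau> \<in> upper_half" using V t by blast
  have LQ: "LOC n Q" unfolding Q_def by (intro LOC_comp slash_LOC g expop_LOC)
  have hEh: "hv V (expop n k (LB g) h)" by (intro expop_hv V(1) hh)
  have QE: "Q h \<beta>' w = expop n k (LB g) h \<beta>' w" if b': "\<beta>' \<in> multi n" and w: "w \<in> V" for \<beta>' w
  proof -
    obtain r' where r': "r' > 0" "ball w r' \<subseteq> V" using V(1) w open_contains_ball by blast
    have "expop n k (LB g) h \<beta>' w = Q h \<beta>' w"
      by (rule transfer[OF oe[folded Q_def] expop_LOC LQ b' _ r'(1)])
         (use V w hh r'(2) in \<open>auto simp: hv_def intro: holomorphic_on_subset\<close>)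
    then show ?thesis by simp
  qed
  have "expop n k (LA g) (expop n k (\<lambda>\<alpha>. - Y \<alpha>) h) \<beta> \<tau> = W \<beta> \<tau>" by (simp add: W_def)
  also have "\<dots> = slash k g (expop n k (\<lambda>\<alpha>. - Y \<alpha>)) (slash k g (expop n k Y) W) \<beta> \<tau>"
    by (rule slash_inv[OF V inv inv' g hW t, symmetric])
  also have "slash k g (expop n k Y) W = Q h" by (simp add: Q_def W_def)
  also have "slash k g (expop n k (\<lambda>\<alpha>. - Y \<alpha>)) (Q h) \<beta> \<tau> = slash k g (expop n k (\<lambda>\<alpha>. - Y \<alpha>)) (expop n k (LB g) h) \<beta> \<tau>"
  proof (rule LOC_val[OF slash_LOC[OF g expop_LOC] b tH r(1)], rule agrr_eq, intro conjI ballI)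
    fix \<beta>' w assume b': "\<beta>' \<in> lower n \<beta>" and w: "w \<in> ball \<tau> r"
    show "Q h \<beta>' w = expop n k (LB g) h \<beta>' w" using QE[OF lower_multi[OF b']] w r(2) by blast
  next
    fix \<beta>' assume b': "\<beta>' \<in> lower n \<beta>"
    show hb: "expop n k (LB g) h \<beta>' holomorphic_on ball \<tau> r"
      using hEh r(2) by (auto simp: hv_def intro: holomorphic_on_subset)
    show "Q h \<beta>' holomorphic_on ball \<tau> r"
      by (rule holomorphic_transform[OF hb]) (use QE[OF lower_multi[OF b']] r(2) in auto)
  qed
  also have "\<dots> = slash k g (expop n k (\<lambda>\<alpha>. - Y \<alpha>)) (\<lambda>\<beta> w. jfac g w powi (-k) * h \<beta> (moeb g w)) \<beta> \<tau>"
  proof (rule LOC_val[OF slash_LOC[OF g expop_LOC] b tH r(1)], rule agrr_eq, intro conjI ballI)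
    fix \<beta>' w assume b': "\<beta>' \<in> lower n \<beta>" and w: "w \<in> ball \<tau> r"
    show "expop n k (LB g) h \<beta>' w = jfac g w powi (-k) * h \<beta>' (moeb g w)"
      using sec[of \<beta>' w] lower_multi[OF b'] w r(2) by auto
  next
    fix \<beta>'
    show "expop n k (LB g) h \<beta>' holomorphic_on ball \<tau> r"
      using hEh r(2) by (auto simp: hv_def intro: holomorphic_on_subset)
    have "(\<lambda>w. jfac g w powi (-k) * h \<beta>' (moeb g w)) holomorphic_on V"
      by (rule comp_hol[OF g V(2) inv _ jfac_powi_hol[OF g]]) (use hh in \<open>simp add: hv_def\<close>)
    then show "(\<lambda>w. jfac g w powi (-k) * h \<beta>' (moeb g w)) holomorphic_on ball \<tau> r"
      using r(2) by (rule holomorphic_on_subset)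
  qed
  also have "\<dots> = jfac g \<tau> powi (-k) * expop n k (\<lambda>\<alpha>. - Y \<alpha>) h \<beta> (moeb g \<tau>)"
    by (rule slash_unfold[OF g tH])
  finally show ?thesis by simp
qed

theorem proposition3p6:
  fixes G :: "sl2 set" and n :: nat and k :: int
    and LA LB :: "sl2 \<Rightarrow> mi \<Rightarrow> complex \<times> complex \<times> complex"
  assumes "fuchsian_free_pd G"
    and "deform_cocycle n k G LA" and "deform_cocycle n k G LB"
    and "cocycle_equiv n k G LA LB"
  shows "sheaf_iso n G (sections n k G LA) (sections n k G LB)"
proof -
  have GS: "G \<subseteq> SL2R"
    using assms(1) unfolding fuchsian_free_pd_def by (elim conjE)
  have Ginv: "\<forall>g\<in>G. sl_inv g \<in> G"
    using assms(1) unfolding fuchsian_free_pd_def by (elim conjE)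
  obtain Y where oe: "\<forall>g\<in>G. op_eq n (expop n k (LB g))
         (slash k g (expop n k Y) \<circ> expop n k (LA g) \<circ> expop n k (\<lambda>\<alpha>. - (Y \<alpha>)))"
    using assms(4) unfolding cocycle_equiv_def by blast
  define \<phi> where "\<phi> = (\<lambda>V f. res V (expop n k Y f))"
  define \<psi> where "\<psi> = (\<lambda>V h. res V (expop n k (\<lambda>\<alpha>. - Y \<alpha>) h))"
  have part1: "bij_betw (\<phi> V) (sections n k G LA V) (sections n k G LB V) \<and>
        (\<forall>f\<in>sections n k G LA V. \<forall>f'\<in>sections n k G LA V. \<phi> V (ser_add f f') = ser_add (\<phi> V f) (\<phi> V f')) \<and>
        (\<forall>s. \<forall>f\<in>sections n k G LA V. \<phi> V (ps_scale n s f) = ps_scale n s (\<phi> V f))"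
    if iV: "inv_open G V" for V
  proof -
    have V: "open V" "V \<subseteq> upper_half" and inv: "\<forall>g\<in>G. moeb g ` V \<subseteq> V"
      using iV by (auto simp: inv_open_def)
    have map1: "\<phi> V f \<in> sections n k G LB V" if f: "f \<in> sections n k G LA V" for f
      unfolding \<phi>_def
    proof (rule sections_intro[OF V(1) expop_hv[OF V(1) sec_hv[OF f]] expop_zo[OF sec_zo[OF f]] inv])
      fix g \<beta> \<tau> assume g: "g \<in> G" and b: "\<beta> \<in> multi n" and t: "\<tau> \<in> V"
      have gS: "g \<in> SL2R" using GS g by (rule subsetD)
      have ig: "moeb g ` V \<subseteq> V" using inv g by (rule bspec)
      have oeg: "op_eq n (expop n k (LB g)) (slash k g (expop n k Y) \<circ> expop n k (LA g) \<circ> expop n k (\<lambda>\<alpha>. - Y \<alpha>))"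
        using oe g by (rule bspec)
      show "jfac g \<tau> powi - k * expop n k Y f \<beta> (moeb g \<tau>) = expop n k (LB g) (expop n k Y f) \<beta> \<tau>"
        by (rule fwd[where LA=LA and LB=LB and Y=Y and g=g, OF V ig gS oeg sec_hv[OF f] sec_eq[OF f g] b t])
    qed
    have map2: "\<psi> V h \<in> sections n k G LA V" if h: "h \<in> sections n k G LB V" for h
      unfolding \<psi>_def
    proof (rule sections_intro[OF V(1) expop_hv[OF V(1) sec_hv[OF h]] expop_zo[OF sec_zo[OF h]] inv])
      fix g \<beta> \<tau> assume g: "g \<in> G" and b: "\<beta> \<in> multi n" and t: "\<tau> \<in> V"
      show "jfac g \<tau> powi - k * expop n k (\<lambda>\<alpha>. - Y \<alpha>) h \<beta> (moeb g \<tau>) = expop n k (LA g) (expop n k (\<lambda>\<alpha>. - Y \<alpha>) h) \<beta> \<tau>"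
      proof -
        have gS: "g \<in> SL2R" using GS g by (rule subsetD)
        have ig: "moeb g ` V \<subseteq> V" using inv g by (rule bspec)
        have gi: "sl_inv g \<in> G" using Ginv g by (rule bspec)
        have ig': "moeb (sl_inv g) ` V \<subseteq> V" using inv gi by (rule bspec)
        have oeg: "op_eq n (expop n k (LB g)) (slash k g (expop n k Y) \<circ> expop n k (LA g) \<circ> expop n k (\<lambda>\<alpha>. - Y \<alpha>))"
          using oe g by (rule bspec)
        show ?thesis by (rule bwd[where LA=LA and LB=LB and Y=Y and g=g, OF V ig ig' gS oeg sec_hv[OF h] sec_eq[OF h g] b t])
      qed
    qed
    have inv1: "\<psi> V (\<phi> V f) = f" if f: "f \<in> sections n k G LA V" for f
    proof (intro ext)
      fix \<beta> \<tau>
      show "\<psi> V (\<phi> V f) \<beta> \<tau> = f \<beta> \<tau>"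
      proof (cases "\<tau> \<in> V")
        case True
        have "expop n k (\<lambda>\<alpha>. - Y \<alpha>) (res V (expop n k Y f)) \<beta> \<tau> = expop n k (\<lambda>\<alpha>. - Y \<alpha>) (expop n k Y f) \<beta> \<tau>"
          by (rule expop_loc_all[OF V(1) _ True]) (simp add: res_def)
        also have "\<dots> = f \<beta> \<tau>" by (rule exp_inv'[OF V(1) sec_hv[OF f] True])
        finally show ?thesis using True by (simp add: \<phi>_def \<psi>_def res_def)
      next
        case False
        then show ?thesis using sec_out[OF f False] by (simp add: \<phi>_def \<psi>_def res_def)
      qed
    qed
    have inv2: "\<phi> V (\<psi> V h) = h" if h: "h \<in> sections n k G LB V" for h
    proof (intro ext)
      fix \<beta> \<tau>
      show "\<phi> V (\<psi> V h) \<beta> \<tau> = h \<beta> \<tau>"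
      proof (cases "\<tau> \<in> V")
        case True
        have "expop n k Y (res V (expop n k (\<lambda>\<alpha>. - Y \<alpha>) h)) \<beta> \<tau> = expop n k Y (expop n k (\<lambda>\<alpha>. - Y \<alpha>) h) \<beta> \<tau>"
          by (rule expop_loc_all[OF V(1) _ True]) (simp add: res_def)
        also have "\<dots> = h \<beta> \<tau>" by (rule exp_inv[OF V(1) sec_hv[OF h] True])
        finally show ?thesis using True by (simp add: \<phi>_def \<psi>_def res_def)
      next
        case False
        then show ?thesis using sec_out[OF h False] by (simp add: \<phi>_def \<psi>_def res_def)
      qed
    qed
    have bij: "bij_betw (\<phi> V) (sections n k G LA V) (sections n k G LB V)"
    proof (rule bij_betwI[where g="\<psi> V"])
      show "\<phi> V \<in> sections n k G LA V \<rightarrow> sections n k G LB V" using map1 by (rule funcsetI)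
      show "\<psi> V \<in> sections n k G LB V \<rightarrow> sections n k G LA V" using map2 by (rule funcsetI)
      show "\<psi> V (\<phi> V x) = x" if "x \<in> sections n k G LA V" for x using inv1[OF that] .
      show "\<phi> V (\<psi> V y) = y" if "y \<in> sections n k G LB V" for y using inv2[OF that] .
    qed
    have add: "\<phi> V (ser_add f f') = ser_add (\<phi> V f) (\<phi> V f')"
      if f: "f \<in> sections n k G LA V" and f': "f' \<in> sections n k G LA V" for f f'
    proof (intro ext)
      fix \<beta> \<tau>
      show "\<phi> V (ser_add f f') \<beta> \<tau> = ser_add (\<phi> V f) (\<phi> V f') \<beta> \<tau>"
        using expop_add[OF V(1) sec_hv[OF f] sec_hv[OF f'], of \<tau> n k Y \<beta>]
        by (cases "\<tau> \<in> V") (auto simp: \<phi>_def res_def ser_add_def)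
    qed
    have scal: "\<phi> V (ps_scale n s f) = ps_scale n s (\<phi> V f)"
      if f: "f \<in> sections n k G LA V" for s f
    proof (intro ext)
      fix \<gamma> \<tau>
      show "\<phi> V (ps_scale n s f) \<gamma> \<tau> = ps_scale n s (\<phi> V f) \<gamma> \<tau>"
      proof (cases "\<tau> \<in> V")
        case True
        then show ?thesis
          using expop_ps[OF V(1) sec_hv[OF f] True, of n k Y s \<gamma>]
          by (simp add: \<phi>_def res_def ps_scale_def)
      next
        case False
        then show ?thesis by (simp add: \<phi>_def res_def ps_scale_def)
      qed
    qed
    show ?thesis
    proof (intro conjI ballI allI)
      show "bij_betw (\<phi> V) (sections n k G LA V) (sections n k G LB V)" by (rule bij)
      show "\<phi> V (ser_add f f') = ser_add (\<phi> V f) (\<phi> V f')"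
        if "f \<in> sections n k G LA V" "f' \<in> sections n k G LA V" for f f' using add[OF that] .
      show "\<phi> V (ps_scale n s f) = ps_scale n s (\<phi> V f)"
        if "f \<in> sections n k G LA V" for s f using scal[OF that] .
    qed
  qed
  have part2: "\<phi> W (res W f) = res W (\<phi> V f)"
    if iV: "inv_open G V" and iW: "inv_open G W" and WV: "W \<subseteq> V" and f: "f \<in> sections n k G LA V" for V W f
  proof (intro ext)
    fix \<beta> \<tau>
    have W: "open W" using iW by (simp add: inv_open_def)
    show "\<phi> W (res W f) \<beta> \<tau> = res W (\<phi> V f) \<beta> \<tau>"
    proof (cases "\<tau> \<in> W")
      case True
      have "expop n k Y (res W f) \<beta> \<tau> = expop n k Y f \<beta> \<tau>"
        by (rule expop_loc_all[OF W _ True]) (simp add: res_def)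
      then show ?thesis using True WV by (auto simp: \<phi>_def res_def)
    next
      case False
      then show ?thesis by (simp add: \<phi>_def res_def)
    qed
  qed
  show ?thesis unfolding sheaf_iso_def
    by (rule exI[of _ \<phi>], rule conjI, (intro allI impI, erule part1),
        (intro allI impI ballI, elim conjE, rule part2; assumption))
qed

end
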